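(* Let $0<\beta<1+O(n^{-1/2})$ and write $\beta=1-\delta$. Consider the normalized magnetization chain $(S_t)$ of the Glauber dynamics for the mean-field Ising model on $n$ vertices, started from an arbitrary state $s_0$, and let $\tau_0=\min\{t:|S_t|\le n^{-1}\}$. For $\gamma>0$ define $$t_n(\gamma)=\begin{cases}\frac{n}{2\delta}\log(\delta^2n)+(\gamma+3)\frac n\delta, & \text{if }\delta^2n\to\infty,\\[2pt] \big(200+6\gamma(1+6\sqrt{\delta^2n})\big)n^{3/2}, & \text{if }\delta^2n=O(1).\end{cases}$$ Then there exists a constant $c>0$ such that $\mathbb{P}_{s_0}(\tau_0>t_n(\gamma))\le c/\sqrt{\gamma}$ for all $\gamma>0$, all starting states $s_0$ and all sufficiently large $n$.
   Context: For $n\ge1$ and $\beta\ge0$, the mean-field Ising measure on $\{1,-1\}^n$ is $\mu_n(\sigma)\propto\exp\big(\frac{\beta}{n}\sum_{x<y}\sigma(x)\sigma(y)\big)$; the heat-bath Glauber dynamics chooses a uniform vertex and resamples its spin from $\mu_n$ conditioned on the other spins. The normalized magnetization chain $S_t=\frac1n\sum_iX_t(i)$ is a Markov chain on $\{-1,-1+\frac2n,\dots,1\}$ with $P(s,s-\frac2n)=\frac{1+s}{2}\cdot\frac{1-\tanh(\beta(s-1/n))}{2}$, $P(s,s+\frac2n)=\frac{1-s}{2}\cdot\frac{1+\tanh(\beta(s+1/n))}{2}$, and remaining mass on $P(s,s)$. Here $\delta=\delta(n)$ is a sequence, and the two cases refer to its asymptotic behaviour. *)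

theory Defs
  imports Complex_Main "HOL-Library.Landau_Symbols"
begin

text \<open>States of the magnetization chain on n vertices are encoded by k in {0..n}
  (number of + spins); the corresponding magnetization is s = (2k - n)/n.\<close>

definition magn :: "nat \<Rightarrow> nat \<Rightarrow> real" where
  "magn n k = (2 * real k - real n) / real n"

definition trans_down :: "nat \<Rightarrow> real \<Rightarrow> nat \<Rightarrow> real" where
  "trans_down n \<beta> k = (let s = magn n k in
     (1 + s) / 2 * ((1 - tanh (\<beta> * (s - 1 / real n))) / 2))"

definition trans_up :: "nat \<Rightarrow> real \<Rightarrow> nat \<Rightarrow> real" where
  "trans_up n \<beta> k = (let s = magn n k in
     (1 - s) / 2 * ((1 + tanh (\<beta> * (s + 1 / real n))) / 2))"

definition magn_trans :: "nat \<Rightarrow> real \<Rightarrow> nat \<Rightarrow> nat \<Rightarrow> real" where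
  "magn_trans n \<beta> k k' =
     (if k' + 1 = k then trans_down n \<beta> k
      else if k' = k + 1 then trans_up n \<beta> k
      else if k' = k then 1 - trans_down n \<beta> k - trans_up n \<beta> k
      else 0)"

definition in_target :: "nat \<Rightarrow> nat \<Rightarrow> bool" where
  "in_target n k \<longleftrightarrow> \<bar>magn n k\<bar> \<le> 1 / real n"

text \<open>survive n beta t k = P_k(S_u not in target for all u = 0..t) = P_k(tau_0 > t).\<close>
fun survive :: "nat \<Rightarrow> real \<Rightarrow> nat \<Rightarrow> nat \<Rightarrow> real" where
  "survive n \<beta> 0 k = (if in_target n k then 0 else 1)"
| "survive n \<beta> (Suc t) k = (if in_target n k then 0
      else (\<Sum>k'\<in>{0..n}. magn_trans n \<beta> k k' * survive n \<beta> t k'))"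

definition prob_tau0_gt :: "nat \<Rightarrow> real \<Rightarrow> nat \<Rightarrow> real \<Rightarrow> real" where
  "prob_tau0_gt n \<beta> k t = (if t < 0 then 1 else survive n \<beta> (nat \<lfloor>t\<rfloor>) k)"

definition tn_large :: "(nat \<Rightarrow> real) \<Rightarrow> nat \<Rightarrow> real \<Rightarrow> real" where
  "tn_large \<delta> n \<gamma> = real n / (2 * \<delta> n) * ln (\<delta> n ^ 2 * real n) + (\<gamma> + 3) * real n / \<delta> n"

definition tn_small :: "(nat \<Rightarrow> real) \<Rightarrow> nat \<Rightarrow> real \<Rightarrow> real" where
  "tn_small \<delta> n \<gamma> = (200 + 6 * \<gamma> * (1 + 6 * sqrt (\<delta> n ^ 2 * real n))) * real n powr (3/2)"

end

theory Submission
  imports Defs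
begin


lemma tanh_le_self: "0 \<le> y \<Longrightarrow> tanh y \<le> (y::real)"
proof -
  assume y: "0 \<le> y"
  have "(\<lambda>x. x - tanh x) 0 \<le> (\<lambda>x. x - tanh x) y"
  proof (rule DERIV_nonneg_imp_nondecreasing[OF y])
    fix x :: real
    show "\<exists>d. ((\<lambda>x. x - tanh x) has_real_derivative d) (at x) \<and> 0 \<le> d"
      by (rule exI[of _ "1 - (1 - tanh x ^ 2)"]) (auto intro!: derivative_eq_intros)
  qed
  thus ?thesis by simp
qed

lemma tanh_lipschitz: "a \<le> b \<Longrightarrow> tanh b - tanh a \<le> b - (a::real)"
proof -
  assume ab: "a \<le> b"
  have "(\<lambda>x. x - tanh x) a \<le> (\<lambda>x. x - tanh x) b"
  proof (rule DERIV_nonneg_imp_nondecreasing[OF ab])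
    fix x :: real
    show "\<exists>d. ((\<lambda>x. x - tanh x) has_real_derivative d) (at x) \<and> 0 \<le> d"
      by (rule exI[of _ "1 - (1 - tanh x ^ 2)"]) (auto intro!: derivative_eq_intros)
  qed
  thus ?thesis by simp
qed

lemma tanh_ge_cubic: "0 \<le> y \<Longrightarrow> y - y^3/3 \<le> tanh (y::real)"
proof -
  assume y: "0 \<le> y"
  have "(\<lambda>x. tanh x - x + x^3/3) 0 \<le> (\<lambda>x. tanh x - x + x^3/3) y"
  proof (rule DERIV_nonneg_imp_nondecreasing[OF y])
    fix x :: real assume x: "0 \<le> x"
    have t: "0 \<le> tanh x" "tanh x \<le> x" using x tanh_le_self by auto
    have "tanh x ^ 2 \<le> x^2" using t by (simp add: power_mono)
    thus "\<exists>d. ((\<lambda>x. tanh x - x + x^3/3) has_real_derivative d) (at x) \<and> 0 \<le> d"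
      by (intro exI[of _ "(1 - tanh x ^ 2) - 1 + 3 * x^2 / 3"]) (auto intro!: derivative_eq_intros)
  qed
  thus ?thesis by simp
qed

lemma tanh_le_cubic: "0 \<le> y \<Longrightarrow> y \<le> 1 \<Longrightarrow> tanh y \<le> (y::real) - y^3/7"
proof -
  assume y: "0 \<le> y" "y \<le> 1"
  have "(\<lambda>x. x - x^3/7 - tanh x) 0 \<le> (\<lambda>x. x - x^3/7 - tanh x) y"
  proof (rule DERIV_nonneg_imp_nondecreasing[OF y(1)])
    fix x :: real assume x: "0 \<le> x" "x \<le> y"
    have "x - x^3/3 \<le> tanh x" using tanh_ge_cubic x by auto
    moreover have "2*x/3 \<le> x - x^3/3"
    proof -
      have "x*x \<le> 1" using x y mult_le_one[of x x] by linarith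
      hence "x*x*x \<le> x" using mult_left_le_one_le[of x "x*x"] x by simp
      hence "x^3 \<le> x" by (simp add: power3_eq_cube)
      thus ?thesis by simp
    qed
    ultimately have "2*x/3 \<le> tanh x" by linarith
    hence "(2*x/3)^2 \<le> tanh x ^ 2" using x by (intro power_mono) auto
    moreover have "(2*x/3)^2 = 4*x^2/9" by (simp add: power2_eq_square)
    moreover have "0 \<le> x^2" by simp
    ultimately have "3 * x^2 / 7 \<le> tanh x ^ 2" by linarith
    thus "\<exists>d. ((\<lambda>x. x - x^3/7 - tanh x) has_real_derivative d) (at x) \<and> 0 \<le> d"
      by (intro exI[of _ "1 - 3 * x^2 / 7 - (1 - tanh x ^ 2)"]) (auto intro!: derivative_eq_intros)
  qed
  thus ?thesis by simp
qed

lemma tanh_midpoint: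
  assumes "0 \<le> h" "h \<le> (a::real)"
  shows "tanh (a + h) + tanh (a - h) \<le> 2 * tanh a"
proof -
  define A where "A = tanh a"
  define H where "H = tanh h"
  have tA: "0 \<le> A" "A < 1" using assms by (auto simp: A_def tanh_real_lt_1)
  have tH: "0 \<le> H" "H < 1" using assms by (auto simp: H_def tanh_real_lt_1)
  have "tanh (a + h) = (A + H) / (1 + A * H)" unfolding A_def H_def by (rule tanh_add) auto
  moreover have "tanh (a - h) = (A - H) / (1 - A * H)"
    using tanh_add[of a "-h"] unfolding A_def H_def by simp
  moreover have "A * H < 1" using tA tH mult_left_le_one_le[of H A] by linarith
  moreover have "(A + H) / (1 + A * H) + (A - H) / (1 - A * H) \<le> 2 * A"
  proof -
    have p1: "0 < 1 + A*H" "0 < 1 - A*H" using tA tH \<open>A*H<1\<close> by (auto intro: add_pos_nonneg)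
    have "(A + H) / (1 + A * H) + (A - H) / (1 - A * H) = 2*A*(1 - H^2) / ((1 + A*H)*(1 - A*H))"
      using p1 by (simp add: field_simps power2_eq_square)
    also have "\<dots> \<le> 2*A"
    proof -
      have "2*A*(1 - H^2) \<le> 2*A*((1 + A*H)*(1 - A*H))"
      proof (rule mult_left_mono)
        have "A^2 \<le> 1" using tA by (simp add: power_le_one)
        hence "A^2 * H^2 \<le> H^2" using mult_left_le_one_le[of "H^2" "A^2"] by simp
        thus "1 - H\<^sup>2 \<le> (1 + A * H) * (1 - A * H)" by (simp add: algebra_simps power2_eq_square)
      qed (use tA in auto)
      thus ?thesis using p1 by (simp add: divide_le_eq)
    qed
    finally show ?thesis .
  qed
  ultimately show ?thesis by (simp add: A_def)
qed



definition Uf :: "nat \<Rightarrow> real \<Rightarrow> real \<Rightarrow> real" where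
  "Uf n \<beta> s = (1 - s) / 2 * ((1 + tanh (\<beta> * (s + 1 / real n))) / 2)"
definition Df :: "nat \<Rightarrow> real \<Rightarrow> real \<Rightarrow> real" where
  "Df n \<beta> s = (1 + s) / 2 * ((1 - tanh (\<beta> * (s - 1 / real n))) / 2)"

lemma trans_up_Uf: "trans_up n \<beta> k = Uf n \<beta> (magn n k)"
  by (simp add: trans_up_def Uf_def Let_def)
lemma trans_down_Df: "trans_down n \<beta> k = Df n \<beta> (magn n k)"
  by (simp add: trans_down_def Df_def Let_def)

lemma Uf_neg: "Uf n \<beta> (-s) = Df n \<beta> s"
proof -
  have "\<beta> * (- s + 1 / real n) = - (\<beta> * (s - 1 / real n))" by (simp add: algebra_simps)
  hence "tanh (\<beta> * (- s + 1 / real n)) = - tanh (\<beta> * (s - 1 / real n))" by simp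
  thus ?thesis by (simp add: Uf_def Df_def)
qed
lemma Df_neg: "Df n \<beta> (-s) = Uf n \<beta> s"
  using Uf_neg[of n \<beta> "-s"] by simp

lemma UD_bounds:
  assumes "\<bar>s\<bar> \<le> 1"
  shows "0 \<le> Uf n \<beta> s" "0 \<le> Df n \<beta> s" "Uf n \<beta> s + Df n \<beta> s \<le> 1"
proof -
  have t1: "-1 < tanh (\<beta> * (s + 1 / real n))" "tanh (\<beta> * (s + 1 / real n)) < 1"
    by (auto simp: tanh_real_lt_1 tanh_real_gt_neg1)
  have t2: "-1 < tanh (\<beta> * (s - 1 / real n))" "tanh (\<beta> * (s - 1 / real n)) < 1"
    by (auto simp: tanh_real_lt_1 tanh_real_gt_neg1)
  have s: "0 \<le> 1 - s" "0 \<le> 1 + s" using assms by auto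
  show "0 \<le> Uf n \<beta> s" unfolding Uf_def using t1 s by (intro mult_nonneg_nonneg) auto
  show "0 \<le> Df n \<beta> s" unfolding Df_def using t2 s by (intro mult_nonneg_nonneg) auto
  have "Uf n \<beta> s \<le> (1 - s)/2" unfolding Uf_def using t1 s
    by (intro mult_left_le) auto
  moreover have "Df n \<beta> s \<le> (1 + s)/2" unfolding Df_def using t2 s
    by (intro mult_left_le) auto
  moreover have "(1-s)/2 + (1+s)/2 = 1" by (simp add: field_simps)
  ultimately show "Uf n \<beta> s + Df n \<beta> s \<le> 1" by linarith
qed

lemma magn_bounds: "0 < n \<Longrightarrow> k \<le> n \<Longrightarrow> \<bar>magn n k\<bar> \<le> 1"
  by (auto simp: magn_def abs_le_iff divide_le_eq le_divide_eq)

lemma magn_0: "0 < n \<Longrightarrow> magn n 0 = -1" by (simp add: magn_def)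
lemma magn_n: "0 < n \<Longrightarrow> magn n n = 1" by (simp add: magn_def)
lemma magn_Suc: "0 < n \<Longrightarrow> magn n (Suc k) = magn n k + 2 / real n"
  by (simp add: magn_def field_simps)
lemma magn_pred: "0 < n \<Longrightarrow> 1 \<le> k \<Longrightarrow> magn n (k - 1) = magn n k - 2 / real n"
  by (simp add: magn_def field_simps of_nat_diff)

lemma Df_m1: "0 < n \<Longrightarrow> Df n \<beta> (-1) = 0" by (simp add: Df_def)
lemma Uf_1: "0 < n \<Longrightarrow> Uf n \<beta> 1 = 0" by (simp add: Uf_def)

lemma sum_trans:
  assumes "k \<le> n"
  shows "(\<Sum>k'\<in>{0..n}. magn_trans n \<beta> k k' * g k') =
     trans_down n \<beta> k * g (k - 1) * (if 1 \<le> k then 1 else 0)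
   + trans_up n \<beta> k * g (k + 1) * (if k < n then 1 else 0)
   + (1 - trans_down n \<beta> k - trans_up n \<beta> k) * g k"
proof -
  have "(\<Sum>k'\<in>{0..n}. magn_trans n \<beta> k k' * g k') =
     (\<Sum>k'\<in>{0..n}. (if k' = k - 1 \<and> 1 \<le> k then trans_down n \<beta> k * g k' else 0)
        + (if k' = k + 1 then trans_up n \<beta> k * g k' else 0)
        + (if k' = k then (1 - trans_down n \<beta> k - trans_up n \<beta> k) * g k' else 0))"
    by (rule sum.cong) (auto simp: magn_trans_def)
  also have "\<dots> = (\<Sum>k'\<in>{0..n}. (if k' = k - 1 \<and> 1 \<le> k then trans_down n \<beta> k * g k' else 0))
        + (\<Sum>k'\<in>{0..n}. (if k' = k + 1 then trans_up n \<beta> k * g k' else 0))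
        + (\<Sum>k'\<in>{0..n}. (if k' = k then (1 - trans_down n \<beta> k - trans_up n \<beta> k) * g k' else 0))"
    by (simp add: sum.distrib)
  also have "(\<Sum>k'\<in>{0..n}. (if k' = k - 1 \<and> 1 \<le> k then trans_down n \<beta> k * g k' else 0))
      = trans_down n \<beta> k * g (k - 1) * (if 1 \<le> k then 1 else 0)"
  proof (cases "1 \<le> k")
    case True
    have "k - 1 \<le> n" using assms by simp
    thus ?thesis using True by (simp add: sum.delta)
  qed simp
  also have "(\<Sum>k'\<in>{0..n}. (if k' = k + 1 then trans_up n \<beta> k * g k' else 0))
      = trans_up n \<beta> k * g (k + 1) * (if k < n then 1 else 0)"
    by (simp add: sum.delta)
  also have "(\<Sum>k'\<in>{0..n}. (if k' = k then (1 - trans_down n \<beta> k - trans_up n \<beta> k) * g k' else 0))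
      = (1 - trans_down n \<beta> k - trans_up n \<beta> k) * g k"
    using assms by (simp add: sum.delta)
  finally show ?thesis .
qed

definition drift :: "nat \<Rightarrow> real \<Rightarrow> (real \<Rightarrow> real) \<Rightarrow> real \<Rightarrow> real" where
  "drift n \<beta> F s = Df n \<beta> s * F (s - 2 / real n) + Uf n \<beta> s * F (s + 2 / real n)
     + (1 - Uf n \<beta> s - Df n \<beta> s) * F s"

lemma sum_trans_magn:
  assumes "k \<le> n" "0 < n"
  shows "(\<Sum>k'\<in>{0..n}. magn_trans n \<beta> k k' * F (magn n k')) = drift n \<beta> F (magn n k)"
proof -
  have a: "trans_down n \<beta> k * F (magn n (k - 1)) * (if 1 \<le> k then 1 else 0)
         = Df n \<beta> (magn n k) * F (magn n k - 2 / real n)"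
  proof (cases "1 \<le> k")
    case True thus ?thesis using assms magn_pred[of n k] by (simp add: trans_down_Df)
  next
    case False hence "k = 0" by simp
    thus ?thesis using assms by (simp add: trans_down_Df magn_0 Df_m1)
  qed
  have b: "trans_up n \<beta> k * F (magn n (k + 1)) * (if k < n then 1 else 0)
         = Uf n \<beta> (magn n k) * F (magn n k + 2 / real n)"
  proof (cases "k < n")
    case True thus ?thesis using assms by (simp add: trans_up_Uf magn_Suc)
  next
    case False hence "k = n" using assms by simp
    thus ?thesis using assms by (simp add: trans_up_Uf magn_n Uf_1)
  qed
  show ?thesis unfolding sum_trans[OF assms(1)] a b drift_def
    by (simp add: trans_up_Uf trans_down_Df algebra_simps)
qed

lemma drift_neg: "drift n \<beta> F (-s) = drift n \<beta> (\<lambda>x. F (-x)) s"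
  by (simp add: drift_def Uf_neg Df_neg algebra_simps)

lemma drift_alt: "drift n \<beta> F s = F s + Df n \<beta> s * (F (s - 2 / real n) - F s)
     + Uf n \<beta> s * (F (s + 2 / real n) - F s)"
  by (simp add: drift_def algebra_simps)



definition Pop :: "nat \<Rightarrow> real \<Rightarrow> (nat \<Rightarrow> real) \<Rightarrow> nat \<Rightarrow> real" where
  "Pop n \<beta> f k = (\<Sum>k'\<in>{0..n}. magn_trans n \<beta> k k' * f k')"

fun ev :: "nat \<Rightarrow> real \<Rightarrow> nat \<Rightarrow> (nat \<Rightarrow> real) \<Rightarrow> nat \<Rightarrow> real" where
  "ev n \<beta> 0 f k = f k"
| "ev n \<beta> (Suc t) f k = Pop n \<beta> (ev n \<beta> t f) k"

lemma trans_nonneg: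
  assumes "0 < n" "k \<le> n"
  shows "0 \<le> magn_trans n \<beta> k k'"
proof -
  have m: "\<bar>magn n k\<bar> \<le> 1" using magn_bounds assms by blast
  show ?thesis using UD_bounds[OF m, of n \<beta>]
    by (auto simp: magn_trans_def trans_up_Uf trans_down_Df)
qed

lemma Pop_eq:
  assumes "0 < n" "k \<le> n"
  shows "Pop n \<beta> f k = trans_down n \<beta> k * f (k - 1) * (if 1 \<le> k then 1 else 0)
   + trans_up n \<beta> k * f (k + 1) * (if k < n then 1 else 0)
   + (1 - trans_down n \<beta> k - trans_up n \<beta> k) * f k"
  unfolding Pop_def by (rule sum_trans[OF assms(2)])

lemma row_sum:
  assumes "0 < n" "k \<le> n"
  shows "(\<Sum>k'\<in>{0..n}. magn_trans n \<beta> k k') = 1"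
proof -
  have "(\<Sum>k'\<in>{0..n}. magn_trans n \<beta> k k') = Pop n \<beta> (\<lambda>_. 1) k" by (simp add: Pop_def)
  also have "\<dots> = drift n \<beta> (\<lambda>_. 1) (magn n k)"
    using sum_trans_magn[OF assms(2,1), of \<beta> "\<lambda>_. 1"] by (simp add: Pop_def)
  also have "\<dots> = 1" by (simp add: drift_def)
  finally show ?thesis .
qed

lemma Pop_mono:
  assumes "0 < n" "k \<le> n" "\<And>k'. k' \<le> n \<Longrightarrow> f k' \<le> g k'"
  shows "Pop n \<beta> f k \<le> Pop n \<beta> g k"
  unfolding Pop_def using assms trans_nonneg[OF assms(1,2)]
  by (intro sum_mono mult_left_mono) auto

lemma Pop_lin:
  assumes "0 < n" "k \<le> n"
  shows "Pop n \<beta> (\<lambda>j. a * f j + b * g j + c) k = a * Pop n \<beta> f k + b * Pop n \<beta> g k + c"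
proof -
  have "Pop n \<beta> (\<lambda>j. a * f j + b * g j + c) k =
     a * Pop n \<beta> f k + b * Pop n \<beta> g k + c * (\<Sum>k'\<in>{0..n}. magn_trans n \<beta> k k')"
    unfolding Pop_def by (simp add: algebra_simps sum.distrib sum_distrib_left)
  thus ?thesis using row_sum[OF assms] by simp
qed

lemma Pop_const:
  assumes "0 < n" "k \<le> n"
  shows "Pop n \<beta> (\<lambda>j. c) k = c"
  using Pop_lin[OF assms, where a=0 and f="\<lambda>_. 0" and b=0 and g="\<lambda>_. 0" and c=c and \<beta>=\<beta>] by simp

lemma Pop_jensen:
  assumes "0 < n" "k \<le> n"
  shows "(Pop n \<beta> f k)^2 \<le> Pop n \<beta> (\<lambda>j. (f j)^2) k"
proof -
  define m where "m = Pop n \<beta> f k"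
  have "0 \<le> Pop n \<beta> (\<lambda>j. (f j - m)^2) k"
    using Pop_mono[OF assms, of "\<lambda>_. 0" "\<lambda>j. (f j - m)^2" \<beta>] Pop_const[OF assms] by simp
  also have "Pop n \<beta> (\<lambda>j. (f j - m)^2) k = Pop n \<beta> (\<lambda>j. 1 * (f j)^2 + (-2*m) * f j + m^2) k"
    by (simp add: power2_eq_square algebra_simps)
  also have "\<dots> = Pop n \<beta> (\<lambda>j. (f j)^2) k - m^2"
    using Pop_lin[OF assms, where a=1 and f="\<lambda>j. (f j)^2" and b="-2*m" and g=f and c="m^2" and \<beta>=\<beta>]
    by (simp add: m_def power2_eq_square)
  finally show ?thesis by (simp add: m_def)
qed

lemma ev_Suc': "k \<le> n \<Longrightarrow> ev n \<beta> (Suc t) f k = ev n \<beta> t (Pop n \<beta> f) k"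
proof (induction t arbitrary: k)
  case 0 thus ?case by (simp add: Pop_def)
next
  case (Suc t)
  have "ev n \<beta> (Suc (Suc t)) f k = Pop n \<beta> (ev n \<beta> (Suc t) f) k" by simp
  also have "\<dots> = Pop n \<beta> (ev n \<beta> t (Pop n \<beta> f)) k"
  proof -
    have e: "\<And>x. x \<le> n \<Longrightarrow> ev n \<beta> (Suc t) f x = ev n \<beta> t (Pop n \<beta> f) x" by (rule Suc.IH)
    show ?thesis unfolding Pop_def[of n \<beta> "ev n \<beta> (Suc t) f"] Pop_def[of n \<beta> "ev n \<beta> t (Pop n \<beta> f)"]
      by (intro sum.cong refl) (use e in auto)
  qed
  finally show ?case by simp
qed

lemma ev_mono:
  assumes "0 < n" "k \<le> n" "\<And>k'. k' \<le> n \<Longrightarrow> f k' \<le> g k'"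
  shows "ev n \<beta> t f k \<le> ev n \<beta> t g k"
  using assms(2) by (induction t arbitrary: k) (auto intro!: Pop_mono assms)

lemma ev_lin:
  assumes "0 < n" "k \<le> n"
  shows "ev n \<beta> t (\<lambda>j. a * f j + b * g j + c) k = a * ev n \<beta> t f k + b * ev n \<beta> t g k + c"
  using assms(2)
proof (induction t arbitrary: k)
  case 0 thus ?case by simp
next
  case (Suc t)
  have "ev n \<beta> (Suc t) (\<lambda>j. a * f j + b * g j + c) k
      = Pop n \<beta> (\<lambda>j. a * ev n \<beta> t f j + b * ev n \<beta> t g j + c) k"
    unfolding ev.simps Pop_def by (intro sum.cong refl) (simp add: Suc.IH)
  also have "\<dots> = a * ev n \<beta> (Suc t) f k + b * ev n \<beta> (Suc t) g k + c"
    using Pop_lin[OF assms(1) Suc.prems] by simp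
  finally show ?case .
qed

lemma ev_const:
  assumes "0 < n" "k \<le> n"
  shows "ev n \<beta> t (\<lambda>j. c) k = c"
  using ev_lin[OF assms, where a=0 and f="\<lambda>_. 0" and b=0 and g="\<lambda>_. 0" and c=c and \<beta>=\<beta> and t=t] by simp

lemma ev_bounds:
  assumes "0 < n" "k \<le> n" "\<And>k'. k' \<le> n \<Longrightarrow> a \<le> f k' \<and> f k' \<le> b"
  shows "a \<le> ev n \<beta> t f k" "ev n \<beta> t f k \<le> b"
  using ev_mono[OF assms(1,2), of "\<lambda>_. a" f] ev_mono[OF assms(1,2), of f "\<lambda>_. b"]
    ev_const[OF assms(1,2)] assms(3) by auto

lemma ev_jensen:
  assumes "0 < n" "k \<le> n"
  shows "(ev n \<beta> t f k)^2 \<le> ev n \<beta> t (\<lambda>j. (f j)^2) k"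
  using assms(2)
proof (induction t arbitrary: k)
  case 0 thus ?case by simp
next
  case (Suc t)
  have "(ev n \<beta> (Suc t) f k)^2 \<le> Pop n \<beta> (\<lambda>j. (ev n \<beta> t f j)^2) k"
    using Pop_jensen[OF assms(1) Suc.prems] by simp
  also have "\<dots> \<le> Pop n \<beta> (ev n \<beta> t (\<lambda>j. (f j)^2)) k"
    by (rule Pop_mono[OF assms(1) Suc.prems]) (rule Suc.IH)
  finally show ?case by simp
qed

lemma survive_bounds:
  assumes "0 < n" "k \<le> n"
  shows "0 \<le> survive n \<beta> t k \<and> survive n \<beta> t k \<le> 1"
  using assms(2)
proof (induction t arbitrary: k)
  case 0 thus ?case by simp
next
  case (Suc t)
  have "0 \<le> Pop n \<beta> (survive n \<beta> t) k \<and> Pop n \<beta> (survive n \<beta> t) k \<le> 1"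
    using Pop_mono[OF assms(1) Suc.prems, of "\<lambda>_. 0" "survive n \<beta> t" \<beta>]
      Pop_mono[OF assms(1) Suc.prems, of "survive n \<beta> t" "\<lambda>_. 1" \<beta>]
      Pop_const[OF assms(1) Suc.prems] Suc.IH by auto
  thus ?case by (simp add: Pop_def)
qed

lemma survive_Suc_le:
  assumes "0 < n" "k \<le> n"
  shows "survive n \<beta> (Suc t) k \<le> survive n \<beta> t k"
  using assms(2)
proof (induction t arbitrary: k)
  case 0
  have "Pop n \<beta> (survive n \<beta> 0) k \<le> Pop n \<beta> (\<lambda>_. 1) k"
    using survive_bounds[OF assms(1)] by (intro Pop_mono[OF assms(1) 0]) auto
  thus ?case using Pop_const[OF assms(1) 0] row_sum[OF assms(1) 0] by (simp add: Pop_def)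
next
  case (Suc t)
  have "Pop n \<beta> (survive n \<beta> (Suc t)) k \<le> Pop n \<beta> (survive n \<beta> t) k"
    by (intro Pop_mono[OF assms(1) Suc.prems] Suc.IH)
  thus ?case by (simp add: Pop_def del: survive.simps(2)) (simp add: Pop_def)
qed

lemma survive_split:
  assumes "0 < n" "k \<le> n"
  shows "survive n \<beta> (t1 + t2) k \<le> ev n \<beta> t1 (survive n \<beta> t2) k"
  using assms(2)
proof (induction t1 arbitrary: k)
  case 0 thus ?case by simp
next
  case (Suc t1)
  have nn: "0 \<le> ev n \<beta> (Suc t1) (survive n \<beta> t2) k"
    using ev_bounds(1)[OF assms(1) Suc.prems, of 0 "survive n \<beta> t2" 1] survive_bounds[OF assms(1)]
    by blast
  have "Pop n \<beta> (survive n \<beta> (t1 + t2)) k \<le> Pop n \<beta> (ev n \<beta> t1 (survive n \<beta> t2)) k"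
    by (intro Pop_mono[OF assms(1) Suc.prems] Suc.IH)
  thus ?case using nn by (auto simp: Pop_def)
qed

lemma lyapunov:
  assumes "0 < n"
    and V0: "\<And>k. k \<le> n \<Longrightarrow> 0 \<le> V k"
    and Vd: "\<And>k. k \<le> n \<Longrightarrow> \<not> in_target n k \<Longrightarrow> Pop n \<beta> V k \<le> V k - 1"
    and "k \<le> n"
  shows "real (Suc t) * survive n \<beta> t k \<le> V k"
proof -
  have V1: "1 \<le> V k" if "k \<le> n" "\<not> in_target n k" for k
  proof -
    have "0 \<le> Pop n \<beta> V k"
      using Pop_mono[OF assms(1) that(1), of "\<lambda>_. 0" V \<beta>] Pop_const[OF assms(1) that(1)] V0 by simp
    thus ?thesis using Vd[OF that] by simp
  qed
  have sumb: "(\<Sum>i<Suc t. survive n \<beta> i k) \<le> V k" if "k \<le> n" for t k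
    using that
  proof (induction t arbitrary: k)
    case 0 thus ?case using V0 V1 by simp
  next
    case (Suc t)
    show ?case
    proof (cases "in_target n k")
      case True
      have "(\<Sum>i<Suc (Suc t). survive n \<beta> i k) = 0"
      proof (intro sum.neutral ballI)
        fix i show "survive n \<beta> i k = 0" using True by (cases i) auto
      qed
      thus ?thesis using V0[OF Suc.prems] by simp
    next
      case False
      have "(\<Sum>i<Suc (Suc t). survive n \<beta> i k) = survive n \<beta> 0 k + (\<Sum>i<Suc t. survive n \<beta> (Suc i) k)"
        by (rule sum.lessThan_Suc_shift)
      also have "(\<Sum>i<Suc t. survive n \<beta> (Suc i) k)
          = (\<Sum>i<Suc t. \<Sum>k'\<in>{0..n}. magn_trans n \<beta> k k' * survive n \<beta> i k')"
        using False by simp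
      also have "\<dots> = Pop n \<beta> (\<lambda>k'. \<Sum>i<Suc t. survive n \<beta> i k') k"
        unfolding Pop_def by (subst sum.swap) (simp only: sum_distrib_left)
      also have "\<dots> \<le> Pop n \<beta> V k"
        by (intro Pop_mono[OF assms(1) Suc.prems] Suc.IH)
      finally show ?thesis using Vd[OF Suc.prems False] False by simp
    qed
  qed
  have dec: "survive n \<beta> t k \<le> survive n \<beta> i k" if "i \<le> t" for i
    using that
  proof (induction t)
    case 0 thus ?case by simp
  next
    case (Suc t)
    show ?case
    proof (cases "i = Suc t")
      case False
      hence "i \<le> t" using Suc.prems by simp
      thus ?thesis using Suc.IH survive_Suc_le[OF assms(1) assms(4), of \<beta> t] by linarith
    qed simp
  qed
  have "real (Suc t) * survive n \<beta> t k = (\<Sum>i<Suc t. survive n \<beta> t k)" by simp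
  also have "\<dots> \<le> (\<Sum>i<Suc t. survive n \<beta> i k)" by (intro sum_mono dec) auto
  also have "\<dots> \<le> V k" by (rule sumb[OF assms(4)])
  finally show ?thesis .
qed



lemma exp_quad: "0 \<le> (y::real) \<Longrightarrow> 1 + y + y^2/2 \<le> exp y"
proof -
  assume y: "0 \<le> y"
  have "(\<lambda>x. exp x - 1 - x - x^2/2) 0 \<le> (\<lambda>x. exp x - 1 - x - x^2/2) y"
  proof (rule DERIV_nonneg_imp_nondecreasing[OF y])
    fix x :: real assume "0 \<le> x"
    have "1 + x \<le> exp x" by simp
    hence "0 \<le> exp x - 0 - 1 - 2 * x / 2" by linarith
    moreover have "((\<lambda>x. exp x - 1 - x - x^2/2) has_real_derivative (exp x - 0 - 1 - 2 * x / 2)) (at x)"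
      by (auto intro!: derivative_eq_intros)
    ultimately show "\<exists>d. ((\<lambda>x. exp x - 1 - x - x^2/2) has_real_derivative d) (at x) \<and> 0 \<le> d"
      by blast
  qed
  thus ?thesis by simp
qed

lemma UD_diff: "Uf n \<beta> s - Df n \<beta> s =
   (-2*s + (tanh (\<beta> * (s + 1 / real n)) + tanh (\<beta> * (s - 1 / real n)))
      - s * (tanh (\<beta> * (s + 1 / real n)) - tanh (\<beta> * (s - 1 / real n)))) / 4"
  by (simp add: Uf_def Df_def field_simps)

lemma UD_diff_pos:
  assumes "0 < n" "1 / real n \<le> s" "0 \<le> \<beta>"
  shows "Uf n \<beta> s - Df n \<beta> s \<le> (tanh (\<beta> * s) - s) / 2"
proof -
  have s0: "0 \<le> s" using assms(2) by (smt (verit) of_nat_0_le_iff divide_nonneg_nonneg)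
  have "\<beta> / real n \<le> \<beta> * s" using assms mult_left_mono[OF assms(2) assms(3)] by simp
  hence m: "tanh (\<beta> * s + \<beta> / real n) + tanh (\<beta> * s - \<beta> / real n) \<le> 2 * tanh (\<beta> * s)"
    using assms by (intro tanh_midpoint) auto
  have e: "\<beta> * (s + 1 / real n) = \<beta> * s + \<beta> / real n" "\<beta> * (s - 1 / real n) = \<beta> * s - \<beta> / real n"
    by (simp_all add: algebra_simps)
  have "\<beta> * s - \<beta> / real n \<le> \<beta> * s + \<beta> / real n" using assms by simp
  hence "0 \<le> s * (tanh (\<beta> * s + \<beta> / real n) - tanh (\<beta> * s - \<beta> / real n))"
    using s0 by simp
  thus ?thesis unfolding UD_diff e using m by simp
qed

lemma exp3: "exp (3::real) \<le> 27"
proof -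
  have "exp (3::real) = exp 1 ^ 3" using exp_of_nat_mult[of 3 "1::real"] by simp
  also have "\<dots> \<le> 3 ^ 3" by (intro power_mono exp_le) auto
  finally show ?thesis by simp
qed

lemma tanh_le_19_20: "y \<le> 6/5 \<Longrightarrow> tanh (y::real) \<le> 19/20"
proof -
  assume y: "y \<le> 6/5"
  have "tanh y \<le> tanh (6/5)" using y by simp
  also have "tanh (6/5::real) = (1 - exp (-12/5)) / (1 + exp (-12/5))"
    by (simp add: tanh_real_altdef)
  also have "\<dots> \<le> 19/20"
  proof -
    have "exp (-3::real) \<le> exp (-12/5)" by simp
    moreover have "exp (-3::real) = 1 / exp 3" by (simp add: exp_minus field_simps)
    moreover have "1 / 27 \<le> 1 / exp (3::real)" using exp3 by (simp add: frac_le)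
    ultimately have E: "1/27 \<le> exp (-12/5::real)" by linarith
    have "0 < 1 + exp (-12/5::real)" by (simp add: add_pos_pos)
    thus ?thesis using E by (simp add: divide_le_eq)
  qed
  finally show ?thesis .
qed

lemma tanh_ge_m19_20: "-6/5 \<le> y \<Longrightarrow> -19/20 \<le> tanh (y::real)"
  using tanh_le_19_20[of "-y"] by simp

lemma UD_lower:
  assumes "\<bar>s\<bar> \<le> 1" "\<bar>\<beta> * (s + 1 / real n)\<bar> \<le> 6/5" "\<bar>\<beta> * (s - 1 / real n)\<bar> \<le> 6/5"
  shows "(1 - s) / 80 \<le> Uf n \<beta> s" "(1 + s) / 80 \<le> Df n \<beta> s"
proof -
  have t1: "-19/20 \<le> tanh (\<beta> * (s + 1 / real n))" using abs_le_D2[OF assms(2)] by (intro tanh_ge_m19_20) auto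
  have t2: "tanh (\<beta> * (s - 1 / real n)) \<le> 19/20" using abs_le_D1[OF assms(3)] by (intro tanh_le_19_20) auto
  have s: "0 \<le> 1 - s" "0 \<le> 1 + s" using assms(1) by auto
  have "(1 - s)/2 * (1/40) \<le> (1 - s)/2 * ((1 + tanh (\<beta> * (s + 1 / real n))) / 2)"
    using t1 s by (intro mult_left_mono) auto
  thus "(1 - s) / 80 \<le> Uf n \<beta> s" by (simp add: Uf_def)
  have "(1 + s)/2 * (1/40) \<le> (1 + s)/2 * ((1 - tanh (\<beta> * (s - 1 / real n))) / 2)"
    using t2 s by (intro mult_left_mono) auto
  thus "(1 + s) / 80 \<le> Df n \<beta> s" by (simp add: Df_def)
qed

lemma W_drift:
  assumes n: "4 \<le> n" and s: "\<bar>s\<bar> \<le> 1" and b: "0 \<le> \<beta>"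
    and dl: "\<bar>\<delta>'\<bar> \<le> 1" and c: "0 \<le> c" "c \<le> 1"
    and H: "\<And>r. 1 / real n \<le> r \<Longrightarrow> r \<le> 1 \<Longrightarrow> r * tanh (\<beta> * r) - r^2 \<le> - \<delta>' * r^2 - c * r^4"
  shows "drift n \<beta> (\<lambda>x. x^2) s \<le> s^2 - 2 / real n * (\<delta>' * s^2 + c * s^4) + 9 / (real n)^2"
proof -
  define h where "h = 2 / real n"
  have n0: "0 < real n" using n by simp
  have pos: "2 * h * r * (Uf n \<beta> r - Df n \<beta> r) \<le> h * (- \<delta>' * r^2 - c * r^4)"
    if "1 / real n \<le> r" "r \<le> 1" for r
  proof -
    have r0: "0 \<le> r" using that n0 by (smt (verit) divide_nonneg_nonneg of_nat_0_le_iff)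
    have "2 * h * r * (Uf n \<beta> r - Df n \<beta> r) \<le> 2 * h * r * ((tanh (\<beta> * r) - r) / 2)"
      using UD_diff_pos[of n r \<beta>] that n b r0 by (intro mult_left_mono) (auto simp: h_def)
    also have "\<dots> = h * (r * tanh (\<beta> * r) - r^2)" by (simp add: power2_eq_square field_simps)
    also have "\<dots> \<le> h * (- \<delta>' * r^2 - c * r^4)" using H[OF that] by (intro mult_left_mono) (auto simp: h_def)
    finally show ?thesis .
  qed
  have ud: "0 \<le> Uf n \<beta> s" "0 \<le> Df n \<beta> s" "Uf n \<beta> s + Df n \<beta> s \<le> 1" using UD_bounds[OF s] by auto
  have eq: "drift n \<beta> (\<lambda>x. x^2) s = s^2 + 2 * h * s * (Uf n \<beta> s - Df n \<beta> s) + h^2 * (Uf n \<beta> s + Df n \<beta> s)"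
    unfolding drift_def h_def power2_eq_square by (simp add: algebra_simps add_divide_distrib diff_divide_distrib)
  have hh: "h^2 * (Uf n \<beta> s + Df n \<beta> s) \<le> 4 / (real n)^2"
  proof -
    have "h^2 * (Uf n \<beta> s + Df n \<beta> s) \<le> h^2 * 1" using ud by (intro mult_left_mono) auto
    thus ?thesis by (simp add: h_def power2_eq_square)
  qed
  consider "\<bar>s\<bar> < 1 / real n" | "1 / real n \<le> s" | "s \<le> - (1 / real n)" by linarith
  thus ?thesis
  proof cases
    case 1
    have a1: "\<bar>Uf n \<beta> s - Df n \<beta> s\<bar> \<le> 1" using ud by auto
    have "2 * h * s * (Uf n \<beta> s - Df n \<beta> s) \<le> \<bar>2 * h * s * (Uf n \<beta> s - Df n \<beta> s)\<bar>" by simp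
    also have "\<dots> = 2 * h * \<bar>s\<bar> * \<bar>Uf n \<beta> s - Df n \<beta> s\<bar>" by (simp add: abs_mult h_def)
    also have "\<dots> \<le> 2 * h * (1 / real n) * 1"
      using 1 a1 by (intro mult_mono) (auto simp: h_def)
    finally have t1: "2 * h * s * (Uf n \<beta> s - Df n \<beta> s) \<le> 4 / (real n)^2"
      by (simp add: h_def power2_eq_square)
    have s2: "s^2 \<le> 1 / (real n)^2"
    proof -
      have "s^2 = \<bar>s\<bar>^2" by simp
      also have "\<dots> \<le> (1 / real n)^2" using 1 by (intro power_mono) auto
      finally show ?thesis by (simp add: power_divide)
    qed
    have s4: "s^4 \<le> s^2"
    proof -
      have "s^2 \<le> 1" using s by (simp add: abs_square_le_1)
      hence "s^2 * s^2 \<le> s^2" using mult_left_le_one_le[of "s^2" "s^2"] by simp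
      thus ?thesis by (simp add: power4_eq_xxxx power2_eq_square mult.assoc)
    qed
    have "- (2 / real n * (\<delta>' * s^2 + c * s^4)) \<ge> - (2 / real n * (2 * s^2))"
    proof -
      have "\<delta>' * s^2 \<le> 1 * s^2" using dl by (intro mult_right_mono) auto
      moreover have "c * s^4 \<le> s^2"
      proof -
        have "c * s^4 \<le> 1 * s^4" using c by (intro mult_right_mono) auto
        thus ?thesis using s4 by simp
      qed
      ultimately have "\<delta>' * s^2 + c * s^4 \<le> 2 * s^2" by linarith
      thus ?thesis using n0 by (simp add: divide_le_eq)
    qed
    moreover have "2 / real n * (2 * s^2) \<le> 1 / (real n)^2"
    proof -
      have "2 / real n * (2 * s^2) \<le> 2 / real n * (2 * (1 / (real n)^2))"
        using s2 n0 by (intro mult_left_mono) auto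
      also have "\<dots> = 4 / real n * (1 / (real n)^2)" by simp
      also have "\<dots> \<le> 1 * (1 / (real n)^2)" using n by (intro mult_right_mono) auto
      finally show ?thesis by simp
    qed
    ultimately show ?thesis using eq t1 hh by (simp add: field_simps)
  next
    case 2
    have "2 * h * s * (Uf n \<beta> s - Df n \<beta> s) \<le> h * (- \<delta>' * s^2 - c * s^4)"
      using pos[OF 2] s by auto
    moreover have "h * (- \<delta>' * s^2 - c * s^4) = - (2 / real n * (\<delta>' * s^2 + c * s^4))"
      by (simp add: h_def algebra_simps)
    moreover have "4 / (real n)^2 \<le> 9 / (real n)^2" by (simp add: divide_right_mono)
    ultimately show ?thesis using eq hh by linarith
  next
    case 3
    have "2 * h * (-s) * (Uf n \<beta> (-s) - Df n \<beta> (-s)) \<le> h * (- \<delta>' * (-s)^2 - c * (-s)^4)"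
      using pos[of "-s"] 3 s by auto
    hence "2 * h * s * (Uf n \<beta> s - Df n \<beta> s) \<le> h * (- \<delta>' * s^2 - c * s^4)"
      by (simp add: Uf_neg Df_neg algebra_simps)
    moreover have "h * (- \<delta>' * s^2 - c * s^4) = - (2 / real n * (\<delta>' * s^2 + c * s^4))"
      by (simp add: h_def algebra_simps)
    moreover have "4 / (real n)^2 \<le> 9 / (real n)^2" by (simp add: divide_right_mono)
    ultimately show ?thesis using eq hh by linarith
  qed
qed



definition Phi :: "real \<Rightarrow> real \<Rightarrow> real \<Rightarrow> real \<Rightarrow> real" where
  "Phi K \<theta> a x = K * (1 - exp (- \<theta> * \<bar>x\<bar>)) + a * \<bar>x\<bar>"

lemma Phi_nonneg: "0 \<le> K \<Longrightarrow> 0 \<le> \<theta> \<Longrightarrow> 0 \<le> a \<Longrightarrow> 0 \<le> Phi K \<theta> a x"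
  unfolding Phi_def by (intro add_nonneg_nonneg mult_nonneg_nonneg) auto

lemma Phi_le: "0 \<le> K \<Longrightarrow> 0 \<le> \<theta> \<Longrightarrow> 0 \<le> a \<Longrightarrow> Phi K \<theta> a x \<le> K + a * \<bar>x\<bar>"
  unfolding Phi_def by (simp add: mult_left_le)

lemma Phi_even: "Phi K \<theta> a (-x) = Phi K \<theta> a x" by (simp add: Phi_def)

lemma lyap_real:
  assumes n: "0 < n" and s: "2 / real n \<le> s" "s \<le> 1"
    and K: "0 \<le> K" and th: "0 \<le> \<theta>" and a: "0 \<le> a"
    and H: "K * exp (- \<theta> * s) * (\<theta> * (2 / real n) * (Uf n \<beta> s - Df n \<beta> s)
              - Df n \<beta> s * (\<theta> * (2 / real n))^2 / 2)
            + a * (2 / real n) * (Uf n \<beta> s - Df n \<beta> s) \<le> -1"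
  shows "drift n \<beta> (Phi K \<theta> a) s \<le> Phi K \<theta> a s - 1"
proof -
  define h where "h = 2 / real n"
  define y where "y = \<theta> * h"
  define e where "e = exp (- \<theta> * s)"
  have h0: "0 < h" using n by (simp add: h_def)
  have y0: "0 \<le> y" using th h0 by (simp add: y_def)
  have e0: "0 < e" by (simp add: e_def)
  have s0: "0 \<le> s - h" using s by (simp add: h_def)
  have ud: "0 \<le> Uf n \<beta> s" "0 \<le> Df n \<beta> s" using UD_bounds[of s] s h0 s0 by (auto simp: h_def)
  have up: "Phi K \<theta> a (s + h) - Phi K \<theta> a s \<le> K * e * y + a * h"
  proof -
    have "exp (- \<theta> * (s + h)) = e * exp (- y)"
      by (simp add: e_def y_def algebra_simps flip: exp_add)
    moreover have "1 - exp (- y) \<le> y" using exp_ge_add_one_self[of "-y"] by simp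
    moreover have "Phi K \<theta> a (s + h) - Phi K \<theta> a s = K * (e - exp (- \<theta> * (s + h))) + a * h"
      using s0 h0 by (simp add: Phi_def e_def algebra_simps)
    ultimately have "Phi K \<theta> a (s + h) - Phi K \<theta> a s = K * e * (1 - exp (- y)) + a * h"
      by (simp add: algebra_simps)
    also have "\<dots> \<le> K * e * y + a * h"
      using \<open>1 - exp (- y) \<le> y\<close> K e0 by (intro add_right_mono mult_left_mono) auto
    finally show ?thesis .
  qed
  have dn: "Phi K \<theta> a (s - h) - Phi K \<theta> a s \<le> - K * e * (y + y^2/2) - a * h"
  proof -
    have "exp (- \<theta> * (s - h)) = e * exp y"
      by (simp add: e_def y_def algebra_simps flip: exp_add)
    moreover have "1 + y + y^2/2 \<le> exp y" using exp_quad y0 by blast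
    moreover have "Phi K \<theta> a (s - h) - Phi K \<theta> a s = K * (e - exp (- \<theta> * (s - h))) - a * h"
      using s0 h0 by (simp add: Phi_def e_def algebra_simps)
    ultimately have "Phi K \<theta> a (s - h) - Phi K \<theta> a s = - K * e * (exp y - 1) - a * h"
      by (simp add: algebra_simps)
    also have "\<dots> \<le> - K * e * (y + y^2/2) - a * h"
    proof -
      have "K * e * (y + y^2/2) \<le> K * e * (exp y - 1)"
        using \<open>1 + y + y^2/2 \<le> exp y\<close> K e0 by (intro mult_left_mono) auto
      thus ?thesis by simp
    qed
    finally show ?thesis .
  qed
  have "drift n \<beta> (Phi K \<theta> a) s = Phi K \<theta> a s + Df n \<beta> s * (Phi K \<theta> a (s - h) - Phi K \<theta> a s)
      + Uf n \<beta> s * (Phi K \<theta> a (s + h) - Phi K \<theta> a s)"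
    by (simp add: drift_alt h_def)
  also have "\<dots> \<le> Phi K \<theta> a s + Df n \<beta> s * (- K * e * (y + y^2/2) - a * h)
      + Uf n \<beta> s * (K * e * y + a * h)"
    using up dn ud by (intro add_mono mult_left_mono) auto
  also have "\<dots> = Phi K \<theta> a s + (K * e * (y * (Uf n \<beta> s - Df n \<beta> s) - Df n \<beta> s * y^2 / 2)
      + a * h * (Uf n \<beta> s - Df n \<beta> s))"
    by (simp add: algebra_simps)
  also have "\<dots> \<le> Phi K \<theta> a s - 1"
    using H by (simp add: e_def y_def h_def)
  finally show ?thesis .
qed

lemma lyap_sym:
  assumes n: "0 < n" and s: "2 / real n \<le> \<bar>s\<bar>" "\<bar>s\<bar> \<le> 1"
    and K: "0 \<le> K" and th: "0 \<le> \<theta>" and a: "0 \<le> a"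
    and H: "\<And>r. 2 / real n \<le> r \<Longrightarrow> r \<le> 1 \<Longrightarrow>
        K * exp (- \<theta> * r) * (\<theta> * (2 / real n) * (Uf n \<beta> r - Df n \<beta> r)
              - Df n \<beta> r * (\<theta> * (2 / real n))^2 / 2)
            + a * (2 / real n) * (Uf n \<beta> r - Df n \<beta> r) \<le> -1"
  shows "drift n \<beta> (Phi K \<theta> a) s \<le> Phi K \<theta> a s - 1"
proof (cases "0 \<le> s")
  case True thus ?thesis using lyap_real[OF n _ _ K th a H] s by auto
next
  case False
  have "drift n \<beta> (Phi K \<theta> a) s = drift n \<beta> (\<lambda>x. Phi K \<theta> a (- x)) (- s)"
    using drift_neg[of n \<beta> "\<lambda>x. Phi K \<theta> a (- x)" s] by simp
  also have "(\<lambda>x. Phi K \<theta> a (- x)) = Phi K \<theta> a" by (simp add: Phi_even)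
  also have "drift n \<beta> (Phi K \<theta> a) (- s) \<le> Phi K \<theta> a (-s) - 1"
    using lyap_real[OF n _ _ K th a H] s False by auto
  finally show ?thesis by (simp add: Phi_even)
qed

lemma nontarget_ge:
  assumes "0 < n" "\<not> in_target n k"
  shows "2 / real n \<le> \<bar>magn n k\<bar>"
proof -
  define m :: int where "m = 2 * int k - int n"
  have mm: "magn n k = real_of_int m / real n" by (simp add: magn_def m_def)
  have "1 / real n < \<bar>real_of_int m\<bar> / real n" using assms(2) by (simp add: in_target_def mm)
  hence "1 < \<bar>real_of_int m\<bar>" using assms(1) by (simp add: divide_less_cancel)
  hence "2 \<le> \<bar>m\<bar>" by linarith
  hence "2 \<le> \<bar>real_of_int m\<bar>" by linarith
  thus ?thesis using assms(1) by (simp add: mm divide_right_mono)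
qed

lemma lyap_survive:
  assumes n: "0 < n" and k: "k \<le> n"
    and K: "0 \<le> K" and th: "0 \<le> \<theta>" and a: "0 \<le> a"
    and H: "\<And>r. 2 / real n \<le> r \<Longrightarrow> r \<le> 1 \<Longrightarrow>
        K * exp (- \<theta> * r) * (\<theta> * (2 / real n) * (Uf n \<beta> r - Df n \<beta> r)
              - Df n \<beta> r * (\<theta> * (2 / real n))^2 / 2)
            + a * (2 / real n) * (Uf n \<beta> r - Df n \<beta> r) \<le> -1"
  shows "real (Suc t) * survive n \<beta> t k \<le> Phi K \<theta> a (magn n k)"
proof (rule lyapunov[OF n, where V="\<lambda>j. Phi K \<theta> a (magn n j)"])
  show "0 \<le> Phi K \<theta> a (magn n j)" for j using Phi_nonneg[OF K th a] .
  fix j assume j: "j \<le> n" "\<not> in_target n j"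
  have "Pop n \<beta> (\<lambda>j. Phi K \<theta> a (magn n j)) j = drift n \<beta> (Phi K \<theta> a) (magn n j)"
    unfolding Pop_def by (rule sum_trans_magn[OF j(1) n])
  also have "\<dots> \<le> Phi K \<theta> a (magn n j) - 1"
    using lyap_sym[OF n nontarget_ge[OF n j(2)] magn_bounds[OF n j(1)] K th a H] .
  finally show "Pop n \<beta> (\<lambda>j. Phi K \<theta> a (magn n j)) j \<le> Phi K \<theta> a (magn n j) - 1" .
qed (rule k)

lemma W_recur:
  assumes n: "4 \<le> n" and k: "k \<le> n" and b: "0 \<le> \<beta>"
    and dl: "\<bar>\<delta>'\<bar> \<le> 1" and c: "0 \<le> c" "c \<le> 1"
    and H: "\<And>r. 1 / real n \<le> r \<Longrightarrow> r \<le> 1 \<Longrightarrow> r * tanh (\<beta> * r) - r^2 \<le> - \<delta>' * r^2 - c * r^4"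
  defines "x \<equiv> \<lambda>t. ev n \<beta> t (\<lambda>j. (magn n j)^2) k"
  shows "x (Suc t) \<le> x t - 2 / real n * (\<delta>' * x t + c * (x t)^2) + 9 / (real n)^2"
    and "0 \<le> x t" "x t \<le> 1"
proof -
  have n0: "0 < n" using n by simp
  define W where "W = (\<lambda>j. (magn n j)^2)"
  have Wb: "0 \<le> W j \<and> W j \<le> 1" if "j \<le> n" for j
    using magn_bounds[OF n0 that] by (simp add: W_def abs_square_le_1)
  show "0 \<le> x t" "x t \<le> 1" unfolding x_def using ev_bounds[OF n0 k, of 0 W 1 \<beta> t] Wb
    by (auto simp: W_def)
  have PW: "Pop n \<beta> W j \<le> (1 - 2 / real n * \<delta>') * W j + (- (2 / real n * c)) * (W j)^2 + 9 / (real n)^2"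
    if "j \<le> n" for j
  proof -
    have "Pop n \<beta> W j = drift n \<beta> (\<lambda>x. x^2) (magn n j)"
      unfolding Pop_def W_def by (rule sum_trans_magn[OF that n0])
    also have "\<dots> \<le> (magn n j)^2 - 2 / real n * (\<delta>' * (magn n j)^2 + c * (magn n j)^4) + 9 / (real n)^2"
      by (rule W_drift[OF n magn_bounds[OF n0 that] b dl c H])
    finally show ?thesis by (simp add: W_def algebra_simps power2_eq_square power4_eq_xxxx)
  qed
  have "x (Suc t) = ev n \<beta> t (Pop n \<beta> W) k" unfolding x_def W_def by (rule ev_Suc'[OF k])
  also have "\<dots> \<le> ev n \<beta> t (\<lambda>j. (1 - 2 / real n * \<delta>') * W j + (- (2 / real n * c)) * (W j)^2 + 9 / (real n)^2) k"
    by (rule ev_mono[OF n0 k PW])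
  also have "\<dots> = (1 - 2 / real n * \<delta>') * x t + (- (2 / real n * c)) * ev n \<beta> t (\<lambda>j. (W j)^2) k + 9 / (real n)^2"
    unfolding x_def W_def by (rule ev_lin[OF n0 k])
  also have "\<dots> \<le> (1 - 2 / real n * \<delta>') * x t + (- (2 / real n * c)) * (x t)^2 + 9 / (real n)^2"
  proof -
    have "(x t)^2 \<le> ev n \<beta> t (\<lambda>j. (W j)^2) k" unfolding x_def W_def by (rule ev_jensen[OF n0 k])
    hence "(2 / real n * c) * (x t)^2 \<le> (2 / real n * c) * ev n \<beta> t (\<lambda>j. (W j)^2) k"
      using c n0 by (intro mult_left_mono) auto
    thus ?thesis by simp
  qed
  finally show "x (Suc t) \<le> x t - 2 / real n * (\<delta>' * x t + c * (x t)^2) + 9 / (real n)^2"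
    by (simp add: algebra_simps)
qed

lemma phaseA:
  fixes x :: "nat \<Rightarrow> real" and G :: "real \<Rightarrow> real"
  assumes xb: "\<And>t. 0 \<le> x t \<and> x t \<le> 1"
    and rec: "\<And>t. x (Suc t) \<le> G (x t)"
    and mono: "\<And>a b. 0 \<le> a \<Longrightarrow> a \<le> b \<Longrightarrow> b \<le> 1 \<Longrightarrow> G a \<le> G b"
    and th: "0 < \<theta>" "\<theta> \<le> 1" "G \<theta> \<le> \<theta>"
    and eta: "0 < \<eta>"
    and dec: "\<And>w. \<theta> \<le> w \<Longrightarrow> w \<le> 1 \<Longrightarrow> G w \<le> w - \<eta> * w^2"
  shows "x t \<le> \<theta> \<or> real t * \<eta> \<le> 1 / x t"
proof (induction t)
  case 0 thus ?case using xb[of 0] by simp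
next
  case (Suc t)
  show ?case
  proof (cases "x t \<le> \<theta>")
    case True
    have "x (Suc t) \<le> G (x t)" by (rule rec)
    also have "\<dots> \<le> G \<theta>" using True xb th by (intro mono) auto
    finally show ?thesis using th by simp
  next
    case False
    hence ti: "real t * \<eta> \<le> 1 / x t" using Suc by simp
    have xt: "\<theta> < x t" using False by simp
    have x1: "x (Suc t) \<le> x t - \<eta> * (x t)^2" using rec[of t] dec[of "x t"] xt xb by force
    show ?thesis
    proof (cases "x (Suc t) \<le> \<theta>")
      case False
      hence p: "0 < x (Suc t)" using th by simp
      define z where "z = x t"
      have z0: "0 < z" using xt th by (simp add: z_def)
      have pz: "0 < z - \<eta> * z^2" using p x1 by (simp add: z_def)
      have "1 / z + \<eta> \<le> 1 / (z - \<eta> * z^2)"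
      proof -
        have "(z - \<eta> * z^2) * (1 / z + \<eta>) = 1 - \<eta>^2 * z^2"
          using z0 by (simp add: field_simps power2_eq_square)
        also have "\<dots> \<le> 1" by simp
        finally have "(z - \<eta> * z^2) * (1 / z + \<eta>) \<le> 1" .
        thus ?thesis using pz by (simp add: le_divide_eq mult.commute)
      qed
      also have "1 / (z - \<eta> * z^2) \<le> 1 / x (Suc t)"
        using p x1 by (intro divide_left_mono) (auto simp: z_def)
      finally have "1 / z + \<eta> \<le> 1 / x (Suc t)" .
      moreover have "real (Suc t) * \<eta> = real t * \<eta> + \<eta>" by (simp add: algebra_simps)
      ultimately show ?thesis using ti by (simp add: z_def)
    qed simp
  qed
qed

lemma phaseA':
  fixes x :: "nat \<Rightarrow> real" and G :: "real \<Rightarrow> real"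
  assumes xb: "\<And>t. 0 \<le> x t \<and> x t \<le> 1"
    and rec: "\<And>t. x (Suc t) \<le> G (x t)"
    and mono: "\<And>a b. 0 \<le> a \<Longrightarrow> a \<le> b \<Longrightarrow> b \<le> 1 \<Longrightarrow> G a \<le> G b"
    and th: "0 < \<theta>" "\<theta> \<le> 1" "G \<theta> \<le> \<theta>"
    and eta: "0 < \<eta>"
    and dec: "\<And>w. \<theta> \<le> w \<Longrightarrow> w \<le> 1 \<Longrightarrow> G w \<le> w - \<eta> * w^2"
    and t: "1 / (\<eta> * \<theta>) \<le> real t"
  shows "x t \<le> \<theta>"
proof (rule ccontr)
  assume "\<not> x t \<le> \<theta>"
  hence xt: "\<theta> < x t" by simp
  hence "real t * \<eta> \<le> 1 / x t" using phaseA[where x=x and G=G and \<theta>=\<theta> and \<eta>=\<eta>, OF xb rec mono th eta dec, of t] by simp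
  also have "1 / x t < 1 / \<theta>" using xt th by (simp add: frac_less2)
  also have "1 / \<theta> \<le> real t * \<eta>"
    using t th eta by (simp add: divide_le_eq mult.commute mult.left_commute)
  finally show False by simp
qed

lemma phaseB:
  fixes x :: "nat \<Rightarrow> real"
  assumes rec: "\<And>t. x (Suc t) \<le> q * x t + b"
    and q: "0 \<le> q" "q < 1" and x0: "x t0 \<le> \<theta>" and b: "0 \<le> b"
  shows "x (t0 + t) \<le> b / (1 - q) + q^t * \<theta>"
proof (induction t)
  case 0
  have "0 \<le> b / (1 - q)" using q b by simp
  thus ?case using x0 by simp
next
  case (Suc t)
  have "x (t0 + Suc t) \<le> q * x (t0 + t) + b" using rec[of "t0 + t"] by simp
  also have "\<dots> \<le> q * (b / (1 - q) + q^t * \<theta>) + b" using Suc q by (intro add_right_mono mult_left_mono) auto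
  also have "\<dots> = b / (1 - q) + q^(Suc t) * \<theta>" using q by (simp add: field_simps)
  finally show ?case .
qed



lemma case1_H:
  fixes d r :: real
  assumes d: "0 < d" "d < 1" and r: "0 \<le> r" "r \<le> 1"
  shows "r * tanh ((1 - d) * r) - r^2 \<le> - d * r^2 - (if d < 1/2 then 1/56 else 0) * r^4"
proof (cases "d < 1/2")
  case True
  define b where "b = 1 - d"
  have b: "1/2 \<le> b" "b \<le> 1" using True d by (auto simp: b_def)
  have br: "0 \<le> b * r" "b * r \<le> 1" using b r by (auto simp: mult_le_one)
  have "tanh (b * r) \<le> b * r - (b * r)^3 / 7" using tanh_le_cubic br by blast
  moreover have "r^3 / 56 \<le> (b * r)^3 / 7"
  proof -
    have "(1/2)^3 \<le> b^3" using b by (intro power_mono) auto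
    moreover have "(1/2::real)^3 = 1/8" by (simp add: power3_eq_cube)
    ultimately have "1/8 \<le> b^3" by simp
    hence "r^3 * (1/8) \<le> r^3 * b^3" using r by (intro mult_left_mono) auto
    thus ?thesis by (simp add: power_mult_distrib mult_ac)
  qed
  ultimately have "tanh (b * r) \<le> b * r - r^3 / 56" by linarith
  hence "r * tanh (b * r) \<le> r * (b * r - r^3 / 56)" using r by (intro mult_left_mono) auto
  thus ?thesis using True by (simp add: b_def algebra_simps power2_eq_square power3_eq_cube power4_eq_xxxx)
next
  case False
  have "tanh ((1 - d) * r) \<le> (1 - d) * r" using d r by (intro tanh_le_self) auto
  hence "r * tanh ((1 - d) * r) \<le> r * ((1 - d) * r)" using r by (intro mult_left_mono) auto
  thus ?thesis using False by (simp add: algebra_simps power2_eq_square)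
qed

lemma case1_lyapH:
  assumes n: "20 \<le> n" and d: "0 < d" "d < 1" and r: "2 / real n \<le> r" "r \<le> 1"
  defines "\<theta> \<equiv> sqrt (d * real n)"
  defines "y \<equiv> \<theta> * (2 / real n)"
  defines "K \<equiv> 160 * exp 1 / y^2"
  defines "a \<equiv> real n * \<theta> / d"
  shows "K * exp (- \<theta> * r) * (\<theta> * (2 / real n) * (Uf n (1 - d) r - Df n (1 - d) r)
              - Df n (1 - d) r * (\<theta> * (2 / real n))^2 / 2)
            + a * (2 / real n) * (Uf n (1 - d) r - Df n (1 - d) r) \<le> -1"
proof -
  define \<rho> where "\<rho> = Uf n (1 - d) r - Df n (1 - d) r"
  define D where "D = Df n (1 - d) r"
  have n0: "0 < real n" using n by simp
  have th0: "0 < \<theta>" using d n0 by (simp add: \<theta>_def)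
  have y0: "0 < y" using th0 n0 by (simp add: y_def)
  have K0: "0 \<le> K" by (simp add: K_def)
  have a0: "0 \<le> a" using th0 d by (simp add: a_def)
  have r0: "0 \<le> r" using r n0 by (smt (verit) divide_nonneg_nonneg of_nat_0_le_iff)
  have r1n: "1 / real n \<le> r" using r n0 by (smt (verit) divide_right_mono of_nat_0_le_iff)
  have rho: "\<rho> \<le> - d * r / 2"
  proof -
    have "\<rho> \<le> (tanh ((1 - d) * r) - r) / 2" unfolding \<rho>_def using UD_diff_pos[OF _ r1n] d n0 by simp
    also have "tanh ((1 - d) * r) \<le> (1 - d) * r" using d r0 by (intro tanh_le_self) auto
    hence "(tanh ((1 - d) * r) - r) / 2 \<le> - d * r / 2" by (simp add: algebra_simps)
    finally show ?thesis .
  qed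
  have "0 \<le> d * r" using d r0 by simp
  hence rho0: "\<rho> \<le> 0" using rho by linarith
  have D: "1/80 \<le> D"
  proof -
    have rn: "1 / real n \<le> 1/20" using n by (simp add: divide_le_eq)
    have "(1 + r) / 80 \<le> D" unfolding D_def
    proof (rule UD_lower(2))
      show "\<bar>r\<bar> \<le> 1" using r r0 by simp
      have "0 \<le> (1 - d) * (r + 1 / real n)" using d r0 by simp
      moreover have "(1 - d) * (r + 1 / real n) \<le> 1 * (21/20)" using d r rn r0 by (intro mult_mono) auto
      ultimately show "\<bar>(1 - d) * (r + 1 / real n)\<bar> \<le> 6/5" by (subst abs_of_nonneg) linarith+
      have "0 \<le> (1 - d) * (r - 1 / real n)" using d r1n by simp
      moreover have "(1 - d) * (r - 1 / real n) \<le> 1 * 1"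
      proof -
        have "0 \<le> 1 / real n" by simp
        hence "r - 1 / real n \<le> 1" using r by linarith
        thus ?thesis using d r1n by (intro mult_mono) auto
      qed
      ultimately show "\<bar>(1 - d) * (r - 1 / real n)\<bar> \<le> 6/5" by (subst abs_of_nonneg) linarith+
    qed
    thus ?thesis using r0 by simp
  qed
  have eq: "\<theta> * (2 / real n) = y" by (simp add: y_def)
  show ?thesis
  proof (cases "r \<le> 1 / \<theta>")
    case True
    have "exp (-1) \<le> exp (- \<theta> * r)"
    proof -
      have "\<theta> * r \<le> \<theta> * (1 / \<theta>)" using True th0 by (intro mult_left_mono) auto
      thus ?thesis using th0 by simp
    qed
    have "y * \<rho> - D * y^2 / 2 \<le> - (y^2 / 160)"
    proof -
      have "y * \<rho> \<le> 0" using y0 rho0 by (simp add: mult_nonneg_nonpos)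
      moreover have "y^2 / 160 \<le> D * y^2 / 2"
      proof -
        have "(1/80) * y^2 \<le> D * y^2" using D by (intro mult_right_mono) auto
        thus ?thesis by simp
      qed
      ultimately show ?thesis by linarith
    qed
    hence "K * exp (- \<theta> * r) * (y * \<rho> - D * y^2 / 2) \<le> K * exp (- \<theta> * r) * (- (y^2 / 160))"
      using K0 by (intro mult_left_mono) auto
    also have "\<dots> \<le> K * exp (-1) * (- (y^2 / 160))"
      using \<open>exp (-1) \<le> exp (- \<theta> * r)\<close> K0 by (intro mult_right_mono_neg mult_left_mono) auto
    also have "\<dots> = -1" using y0 by (simp add: K_def exp_minus field_simps)
    finally have 1: "K * exp (- \<theta> * r) * (y * \<rho> - D * y^2 / 2) \<le> -1" .
    have 2: "a * (2 / real n) * \<rho> \<le> 0" using a0 n0 rho0 by (intro mult_nonneg_nonpos) auto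
    show ?thesis using 1 2 unfolding eq by (simp add: \<rho>_def D_def)
  next
    case False
    have 1: "K * exp (- \<theta> * r) * (y * \<rho> - D * y^2 / 2) \<le> 0"
    proof -
      have "y * \<rho> \<le> 0" using y0 rho0 by (intro mult_nonneg_nonpos) auto
      moreover have "0 \<le> D * y^2 / 2" using D by simp
      ultimately have "y * \<rho> - D * y^2 / 2 \<le> 0" by linarith
      thus ?thesis using K0 by (simp add: mult_nonneg_nonpos)
    qed
    have "a * (2 / real n) * \<rho> \<le> a * (2 / real n) * (- d * r / 2)"
      using rho a0 n0 by (intro mult_left_mono) auto
    also have "\<dots> \<le> a * (2 / real n) * (- d * (1 / \<theta>) / 2)"
    proof -
      have "d * (1 / \<theta>) \<le> d * r" using False d by (intro mult_left_mono) auto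
      hence "- d * r / 2 \<le> - d * (1 / \<theta>) / 2" by simp
      thus ?thesis using a0 n0 by (intro mult_left_mono) auto
    qed
    also have "\<dots> = -1" using th0 d n0 by (simp add: a_def field_simps)
    finally have 2: "a * (2 / real n) * \<rho> \<le> -1" .
    show ?thesis using 1 2 unfolding eq by (simp add: \<rho>_def D_def)
  qed
qed



lemma nat_ceiling_bounds:
  assumes "0 \<le> (x::real)"
  shows "x \<le> real (nat \<lceil>x\<rceil>)" "real (nat \<lceil>x\<rceil>) \<le> x + 1"
proof -
  have "0 \<le> \<lceil>x\<rceil>" using assms by simp
  hence e: "real (nat \<lceil>x\<rceil>) = real_of_int \<lceil>x\<rceil>" by simp
  show "x \<le> real (nat \<lceil>x\<rceil>)" unfolding e by (rule le_of_int_ceiling)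
  show "real (nat \<lceil>x\<rceil>) \<le> x + 1" unfolding e using of_int_ceiling_le_add_one[of x] by simp
qed

lemma nat_floor_bounds:
  assumes "0 \<le> (x::real)"
  shows "x - 1 \<le> real (nat \<lfloor>x\<rfloor>)" "real (nat \<lfloor>x\<rfloor>) \<le> x"
proof -
  have "0 \<le> \<lfloor>x\<rfloor>" using assms by simp
  hence e: "real (nat \<lfloor>x\<rfloor>) = real_of_int \<lfloor>x\<rfloor>" by simp
  show "x - 1 \<le> real (nat \<lfloor>x\<rfloor>)" unfolding e by linarith
  show "real (nat \<lfloor>x\<rfloor>) \<le> x" unfolding e by linarith
qed

lemma combine:
  assumes n: "0 < n" and k: "k \<le> n" and R: "0 < R" and VR: "0 \<le> VR"
    and Vb: "\<And>j. j \<le> n \<Longrightarrow> (magn n j)^2 \<le> R \<Longrightarrow> real (Suc T2) * survive n \<beta> T2 j \<le> VR"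
  shows "survive n \<beta> (T1 + T2) k \<le> ev n \<beta> T1 (\<lambda>j. (magn n j)^2) k / R + VR / real (Suc T2)"
proof -
  have pw: "survive n \<beta> T2 j \<le> (1 / R) * (magn n j)^2 + 0 * (magn n j)^2 + VR / real (Suc T2)"
    if j: "j \<le> n" for j
  proof (cases "(magn n j)^2 \<le> R")
    case True
    have "survive n \<beta> T2 j \<le> VR / real (Suc T2)"
      using Vb[OF j True] by (simp add: le_divide_eq mult.commute)
    moreover have "0 \<le> (1 / R) * (magn n j)^2" using R by simp
    ultimately show ?thesis by simp
  next
    case False
    have "1 \<le> (1 / R) * (magn n j)^2" using False R by (simp add: le_divide_eq)
    moreover have "survive n \<beta> T2 j \<le> 1" using survive_bounds[OF n j] by simp
    moreover have "0 \<le> VR / real (Suc T2)" using VR by simp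
    ultimately show ?thesis by simp
  qed
  have "survive n \<beta> (T1 + T2) k \<le> ev n \<beta> T1 (survive n \<beta> T2) k" by (rule survive_split[OF n k])
  also have "\<dots> \<le> ev n \<beta> T1 (\<lambda>j. (1 / R) * (magn n j)^2 + 0 * (magn n j)^2 + VR / real (Suc T2)) k"
    by (rule ev_mono[OF n k pw])
  also have "\<dots> = (1 / R) * ev n \<beta> T1 (\<lambda>j. (magn n j)^2) k + 0 * ev n \<beta> T1 (\<lambda>j. (magn n j)^2) k
       + VR / real (Suc T2)"
    by (rule ev_lin[OF n k])
  finally show ?thesis by simp
qed

lemma G_mono:
  fixes \<delta>' c e :: real
  assumes n: "8 \<le> n" and dl: "\<bar>\<delta>'\<bar> \<le> 1" and c: "0 \<le> c" "c \<le> 1"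
    and ab: "0 \<le> a" "a \<le> b" "b \<le> 1"
  shows "a - 2 / real n * (\<delta>' * a + c * a^2) + e \<le> b - 2 / real n * (\<delta>' * b + c * b^2) + e"
proof -
  have n0: "0 < real n" using n by simp
  have "(\<delta>' * b + c * b^2) - (\<delta>' * a + c * a^2) = (b - a) * (\<delta>' + c * (a + b))"
    by (simp add: algebra_simps power2_eq_square)
  also have "\<dots> \<le> (b - a) * 3"
  proof (rule mult_left_mono)
    have "c * (a + b) \<le> 1 * 2" using c ab by (intro mult_mono) auto
    thus "\<delta>' + c * (a + b) \<le> 3" using dl by linarith
  qed (use ab in auto)
  finally have 1: "(\<delta>' * b + c * b^2) - (\<delta>' * a + c * a^2) \<le> (b - a) * 3" .
  have "2 / real n * ((\<delta>' * b + c * b^2) - (\<delta>' * a + c * a^2)) \<le> 2 / real n * ((b - a) * 3)"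
    using 1 n0 by (intro mult_left_mono) auto
  also have "\<dots> \<le> 1 * (b - a)"
  proof -
    have "6 / real n \<le> 1" using n by (simp add: divide_le_eq)
    hence "6 / real n * (b - a) \<le> 1 * (b - a)" using ab by (intro mult_right_mono) auto
    thus ?thesis by simp
  qed
  finally show ?thesis by (simp add: algebra_simps)
qed

lemma pow_exp_bound:
  assumes "0 \<le> z" "z \<le> 1"
  shows "(1 - z)^t \<le> exp (- z * real t)"
proof -
  have "(1 - z)^t \<le> (exp (- z))^t" using assms by (intro power_mono) (auto simp: add.commute[of 1] exp_ge_add_one_self[of "-z", simplified])
  also have "\<dots> = exp (- z * real t)" by (simp add: exp_of_nat_mult[symmetric] mult.commute)
  finally show ?thesis .
qed



lemma case1_core:
  fixes d \<gamma> :: real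
  assumes n: "20 \<le> n" and d: "0 < d" "d < 1" and dn: "504 \<le> d^2 * real n"
    and g: "112 \<le> \<gamma>" and k: "k \<le> n"
  shows "prob_tau0_gt n (1 - d) k (real n / (2 * d) * ln (d ^ 2 * real n) + (\<gamma> + 3) * real n / d)
           \<le> 300 / sqrt \<gamma>"
proof -
  define \<beta> where "\<beta> = 1 - d"
  define c :: real where "c = (if d < 1/2 then 1/56 else 0)"
  define x where "x = (\<lambda>t. ev n \<beta> t (\<lambda>j. (magn n j)^2) k)"
  have n0: "0 < n" and n0': "0 < real n" using n by auto
  have b0: "0 \<le> \<beta>" using d by (simp add: \<beta>_def)
  have c01: "0 \<le> c" "c \<le> 1" by (auto simp: c_def)
  have dl: "\<bar>d\<bar> \<le> 1" using d by simp
  have H: "\<And>r. 1 / real n \<le> r \<Longrightarrow> r \<le> 1 \<Longrightarrow> r * tanh (\<beta> * r) - r^2 \<le> - d * r^2 - c * r^4"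
  proof -
    fix r assume r: "1 / real n \<le> r" "r \<le> 1"
    have "0 \<le> 1 / real n" by simp
    hence "0 \<le> r" using r(1) by linarith
    thus "r * tanh (\<beta> * r) - r^2 \<le> - d * r^2 - c * r^4"
      using case1_H[OF d _ r(2)] by (simp add: \<beta>_def c_def)
  qed
  have n4: "4 \<le> n" using n by simp
  note WR = W_recur[OF n4 k b0 dl c01 H]
  have rec: "x (Suc t) \<le> x t - 2 / real n * (d * x t + c * (x t)^2) + 9 / (real n)^2" for t
    using WR(1) unfolding x_def by blast
  have xb: "0 \<le> x t \<and> x t \<le> 1" for t using WR(2,3) unfolding x_def by blast
  define L1 where "L1 = nat \<lceil>56 * real n / d\<rceil>"
  have A: "x L1 \<le> 2 * d"
  proof (cases "d < 1/2")
    case False thus ?thesis using xb[of L1] by simp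
  next
    case True
    hence cc: "c = 1/56" by (simp add: c_def)
    define G where "G = (\<lambda>w::real. w - 2 / real n * (d * w + c * w^2) + 9 / (real n)^2)"
    define \<eta> where "\<eta> = 1 / (56 * real n)"
    have dec: "G w \<le> w - \<eta> * w^2" if w: "d \<le> w" "w \<le> 1" for w
    proof -
      have "d^2 \<le> w^2" using w d by (intro power_mono) auto
      hence "d^2 * real n \<le> w^2 * real n" using n0' by (intro mult_right_mono) auto
      hence "504 \<le> w^2 * real n" using dn by linarith
      hence "9 / (real n)^2 \<le> w^2 / (56 * real n)" using n0' by (simp add: field_simps power2_eq_square)
      moreover have "0 \<le> 2 / real n * (d * w)" using d w by simp
      moreover have "2 / real n * (c * w^2) = 2 * (w^2 / (56 * real n))" unfolding cc by (simp add: field_simps)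
      ultimately show ?thesis by (simp add: G_def \<eta>_def algebra_simps)
    qed
    have "x L1 \<le> d"
    proof (rule phaseA'[where G=G and \<eta>=\<eta>])
      show "0 \<le> x t \<and> x t \<le> 1" for t by (rule xb)
      show "x (Suc t) \<le> G (x t)" for t using rec[of t] by (simp add: G_def)
      show "G a \<le> G b" if "0 \<le> a" "a \<le> b" "b \<le> 1" for a b
        unfolding G_def using G_mono[of n d c a b] n dl c01 that by simp
      show "0 < d" "d \<le> 1" using d by auto
      have "0 \<le> \<eta> * d^2" by (simp add: \<eta>_def)
      thus "G d \<le> d" using dec[of d] d by linarith
      show "0 < \<eta>" using n0' by (simp add: \<eta>_def)
      show "G w \<le> w - \<eta> * w^2" if "d \<le> w" "w \<le> 1" for w using dec that by blast
      have "1 / (\<eta> * d) = 56 * real n / d" by (simp add: \<eta>_def)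
      also have "\<dots> \<le> real L1" unfolding L1_def using d by (intro nat_ceiling_bounds) simp
      finally show "1 / (\<eta> * d) \<le> real L1" .
    qed
    thus ?thesis using d by simp
  qed
  define q where "q = 1 - 2 * d / real n"
  define L2 where "L2 = nat \<lceil>real n / (2 * d) * ln (d ^ 2 * real n)\<rceil>"
  have lnpos: "0 \<le> ln (d ^ 2 * real n)" using dn by simp
  have q01: "0 \<le> q" "q < 1" using d n by (auto simp: q_def divide_le_eq)
  have B: "x (L1 + L2) \<le> (9 / (real n)^2) / (1 - q) + q^L2 * (2 * d)"
  proof -
    have rq: "x (Suc t) \<le> q * x t + 9 / (real n)^2" for t
    proof -
    have "0 \<le> c * (x t)^2" using c01 by simp
    hence "0 \<le> 2 / real n * (c * (x t)^2)" by simp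
    moreover have "2 / real n * (d * x t + c * (x t)^2) = 2 / real n * (d * x t) + 2 / real n * (c * (x t)^2)"
      by (simp add: distrib_left)
    ultimately have "x (Suc t) \<le> x t - 2 / real n * (d * x t) + 9 / (real n)^2"
      using rec[of t] by linarith
    thus "x (Suc t) \<le> q * x t + 9 / (real n)^2" by (simp add: q_def algebra_simps)
    qed
    show ?thesis using phaseB[of x q "9/(real n)^2" L1 "2*d" L2] rq q01 A by simp
  qed
  have qL2: "q^L2 \<le> 1 / (d^2 * real n)"
  proof -
    have "q^L2 \<le> exp (- (2 * d / real n) * real L2)" unfolding q_def
      using d n by (intro pow_exp_bound) (auto simp: divide_le_eq)
    also have "\<dots> \<le> exp (- ln (d^2 * real n))"
    proof -
      have "real n / (2 * d) * ln (d ^ 2 * real n) \<le> real L2"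
        unfolding L2_def using lnpos d n0' by (intro nat_ceiling_bounds) simp
      hence "2 * d / real n * (real n / (2 * d) * ln (d ^ 2 * real n)) \<le> 2 * d / real n * real L2"
        using d n0' by (intro mult_left_mono) auto
      hence "ln (d ^ 2 * real n) \<le> 2 * d / real n * real L2" using d n0' by simp
      thus ?thesis by simp
    qed
    also have "\<dots> = 1 / (d^2 * real n)" using d n0' by (simp add: exp_minus field_simps)
    finally show ?thesis .
  qed
  have xT1: "x (L1 + L2) \<le> 13 / (2 * d * real n)"
  proof -
    have "(9 / (real n)^2) / (1 - q) = 9 / (2 * d * real n)" using d n0' by (simp add: q_def field_simps power2_eq_square)
    moreover have "q^L2 * (2 * d) \<le> 1 / (d^2 * real n) * (2 * d)" using qL2 d by (intro mult_right_mono) auto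
    moreover have "1 / (d^2 * real n) * (2 * d) = 4 / (2 * d * real n)" using d n0' by (simp add: field_simps power2_eq_square)
    ultimately show ?thesis using B by (simp add: add_divide_distrib[symmetric])
  qed
  define \<theta> where "\<theta> = sqrt (d * real n)"
  define y where "y = \<theta> * (2 / real n)"
  define K where "K = 160 * exp 1 / y^2"
  define a where "a = real n * \<theta> / d"
  have th0: "0 < \<theta>" using d n0' by (simp add: \<theta>_def)
  have th2: "\<theta>^2 = d * real n" using d n0' by (simp add: \<theta>_def)
  have K0: "0 \<le> K" by (simp add: K_def)
  have a0: "0 \<le> a" using th0 d by (simp add: a_def)
  have Kb: "K \<le> 120 * real n / d"
  proof -
    have yy: "y^2 = 4 * d / real n" using th2 n0' by (simp add: y_def power_mult_distrib power_divide field_simps power2_eq_square)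
    have "K = 160 * exp 1 / (4 * d / real n)" unfolding K_def yy ..
    also have "\<dots> = 40 * exp 1 * real n / d" using d n0' by (simp add: field_simps)
    also have "\<dots> \<le> 40 * 3 * real n / d" using exp_le d n0' by (intro divide_right_mono mult_right_mono mult_left_mono) auto
    finally show ?thesis by simp
  qed
  define R where "R = \<gamma> / (d * real n)"
  have R0: "0 < R" using g d n0' by (simp add: R_def)
  define VR where "VR = real n / d * (120 + sqrt \<gamma>)"
  have VR0: "0 \<le> VR" using d g by (simp add: VR_def)
  define m where "m = nat \<lfloor>real n / (2 * d) * ln (d ^ 2 * real n) + (\<gamma> + 3) * real n / d\<rfloor>"
  define T2 where "T2 = m - (L1 + L2)"
  have time: "L1 + L2 \<le> m \<and> \<gamma> * real n / (2 * d) \<le> real (Suc T2)"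
  proof -
    define tn where "tn = real n / (2 * d) * ln (d ^ 2 * real n) + (\<gamma> + 3) * real n / d"
    have tn0: "0 \<le> tn" using lnpos d g n0' by (simp add: tn_def)
    have "tn - 1 \<le> real m" unfolding m_def tn_def[symmetric] by (rule nat_floor_bounds[OF tn0])
    moreover have "real L1 \<le> 56 * real n / d + 1" unfolding L1_def using d n0' by (intro nat_ceiling_bounds) simp
    moreover have "real L2 \<le> real n / (2 * d) * ln (d ^ 2 * real n) + 1"
      unfolding L2_def using lnpos d n0' by (intro nat_ceiling_bounds) simp
    moreover have "56 * real n / d + 3 + \<gamma> * real n / (2 * d) \<le> (\<gamma> + 3) * real n / d"
    proof -
      have nd: "1 \<le> real n / d" using d n0' n by (simp add: le_divide_eq)
      have "(\<gamma> + 3) * real n / d - 56 * real n / d - \<gamma> * real n / (2 * d) = (\<gamma> / 2 - 53) * (real n / d)"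
        using d by (simp add: field_simps)
      also have "\<dots> \<ge> 3 * (real n / d)" using g nd by (intro mult_right_mono) auto
      finally show ?thesis using nd by linarith
    qed
    ultimately have "real (L1 + L2) + \<gamma> * real n / (2 * d) \<le> real m + 1"
      unfolding tn_def by simp
    moreover have "1 \<le> \<gamma> * real n / (2 * d)"
    proof -
      have n20: "20 \<le> real n" using n by simp
      have "112 * 20 \<le> \<gamma> * real n" using mult_mono[OF g n20] g by simp
      hence "2 * d \<le> \<gamma> * real n" using d by linarith
      thus ?thesis using d by (simp add: le_divide_eq)
    qed
    ultimately have le: "real (L1 + L2) \<le> real m" by linarith
    hence "L1 + L2 \<le> m" by (simp only: of_nat_le_iff)
    moreover have "real (Suc T2) = real m - real (L1 + L2) + 1" unfolding T2_def using \<open>L1 + L2 \<le> m\<close>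
      by (simp only: of_nat_diff of_nat_Suc)
    ultimately show ?thesis using \<open>real (L1 + L2) + \<gamma> * real n / (2 * d) \<le> real m + 1\<close> by linarith
  qed
  have Vb: "real (Suc T2) * survive n \<beta> T2 j \<le> VR" if j: "j \<le> n" "(magn n j)^2 \<le> R" for j
  proof -
    have "real (Suc T2) * survive n \<beta> T2 j \<le> Phi K \<theta> a (magn n j)"
    proof (rule lyap_survive[OF n0 j(1) K0 _ a0])
      show "0 \<le> \<theta>" using th0 by simp
      fix r assume "2 / real n \<le> r" "r \<le> 1"
      thus "K * exp (- \<theta> * r) * (\<theta> * (2 / real n) * (Uf n \<beta> r - Df n \<beta> r) - Df n \<beta> r * (\<theta> * (2 / real n))\<^sup>2 / 2)
          + a * (2 / real n) * (Uf n \<beta> r - Df n \<beta> r) \<le> - 1"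
        using case1_lyapH[OF n d] unfolding \<beta>_def K_def y_def a_def \<theta>_def by blast
    qed
    also have "\<dots> \<le> K + a * \<bar>magn n j\<bar>" by (rule Phi_le[OF K0 _ a0]) (use th0 in simp)
    also have "a * \<bar>magn n j\<bar> \<le> real n / d * sqrt \<gamma>"
    proof -
      have "\<bar>magn n j\<bar> = sqrt ((magn n j)^2)" by simp
      also have "\<dots> \<le> sqrt R" by (rule real_sqrt_le_mono[OF j(2)])
      finally have "a * \<bar>magn n j\<bar> \<le> a * sqrt R" using a0 by (intro mult_left_mono) auto
      also have "a * sqrt R = real n / d * (\<theta> * sqrt R)" by (simp add: a_def)
      also have "\<theta> * sqrt R = sqrt \<gamma>" using d n0' g
        by (simp add: \<theta>_def R_def real_sqrt_mult[symmetric])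
      finally show ?thesis .
    qed
    finally show ?thesis using Kb by (simp add: VR_def algebra_simps)
  qed
  have main: "survive n \<beta> ((L1 + L2) + T2) k \<le> x (L1 + L2) / R + VR / real (Suc T2)"
    unfolding x_def by (rule combine[OF n0 k R0 VR0 Vb])
  have "x (L1 + L2) / R \<le> (13 / (2 * d * real n)) / R" using xT1 R0 by (intro divide_right_mono) auto
  also have "\<dots> = 13 / (2 * \<gamma>)" using d n0' g by (simp add: R_def field_simps)
  finally have t1: "x (L1 + L2) / R \<le> 13 / (2 * \<gamma>)" .
  have "VR / real (Suc T2) \<le> VR / (\<gamma> * real n / (2 * d))"
    using time VR0 g d n0' by (intro divide_left_mono) auto
  also have "\<dots> = 2 * (120 + sqrt \<gamma>) / \<gamma>" using d n0' g by (simp add: VR_def field_simps)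
  finally have t2: "VR / real (Suc T2) \<le> 2 * (120 + sqrt \<gamma>) / \<gamma>" .
  have sg0: "0 < sqrt \<gamma>" using g by simp
  have gg: "\<gamma> = sqrt \<gamma> * sqrt \<gamma>" using g by simp
  have sg: "sqrt \<gamma> \<le> \<gamma>"
  proof -
    have "1 \<le> sqrt \<gamma>" using g by simp
    hence "sqrt \<gamma> * 1 \<le> sqrt \<gamma> * sqrt \<gamma>" using sg0 by (intro mult_left_mono) auto
    thus ?thesis using gg by simp
  qed
  have "13 / (2 * \<gamma>) + 2 * (120 + sqrt \<gamma>) / \<gamma> = 246.5 / \<gamma> + 2 * (sqrt \<gamma> / \<gamma>)"
    using g by (simp add: field_simps)
  also have "sqrt \<gamma> / \<gamma> = 1 / sqrt \<gamma>"
  proof -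
    have "0 < \<gamma>" using g by simp
    thus ?thesis using sg0 by (simp add: field_simps)
  qed
  also have "246.5 / \<gamma> \<le> 246.5 / sqrt \<gamma>" using sg sg0 by (intro divide_left_mono) auto
  finally have fin: "13 / (2 * \<gamma>) + 2 * (120 + sqrt \<gamma>) / \<gamma> \<le> 248.5 / sqrt \<gamma>" by simp
  have tpos: "\<not> (real n / (2 * d) * ln (d ^ 2 * real n) + (\<gamma> + 3) * real n / d < 0)"
    using lnpos d g n0' by (simp add: not_less)
  have "prob_tau0_gt n (1 - d) k (real n / (2 * d) * ln (d ^ 2 * real n) + (\<gamma> + 3) * real n / d)
     = survive n \<beta> ((L1 + L2) + T2) k"
    using tpos time unfolding prob_tau0_gt_def m_def[symmetric] T2_def \<beta>_def by simp
  also have "\<dots> \<le> 248.5 / sqrt \<gamma>" using main t1 t2 fin by linarith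
  also have "\<dots> \<le> 300 / sqrt \<gamma>" using sg0 by (intro divide_right_mono) auto
  finally show ?thesis .
qed



lemma case2_tanh:
  fixes d r \<Delta> :: real
  assumes d: "d \<le> 1/2" "- \<Delta> \<le> d" and r: "0 \<le> r" "r \<le> 1"
  shows "tanh ((1 - d) * r) \<le> (1 - d) * r - r^3 / 56"
proof (cases "0 \<le> d")
  case True
  define b where "b = 1 - d"
  have b: "1/2 \<le> b" "b \<le> 1" using True d by (auto simp: b_def)
  have br: "0 \<le> b * r" "b * r \<le> 1" using b r by (auto simp: mult_le_one)
  have "tanh (b * r) \<le> b * r - (b * r)^3 / 7" using tanh_le_cubic br by blast
  moreover have "r^3 / 56 \<le> (b * r)^3 / 7"
  proof -
    have "(1/2)^3 \<le> b^3" using b by (intro power_mono) auto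
    moreover have "(1/2::real)^3 = 1/8" by (simp add: power3_eq_cube)
    ultimately have "1/8 \<le> b^3" by simp
    hence "r^3 * (1/8) \<le> r^3 * b^3" using r by (intro mult_left_mono) auto
    thus ?thesis by (simp add: power_mult_distrib mult_ac)
  qed
  ultimately show ?thesis unfolding b_def by linarith
next
  case False
  have "d * r \<le> 0" using False r by (intro mult_nonpos_nonneg) auto
  hence "r \<le> (1 - d) * r" by (simp add: algebra_simps)
  hence "tanh ((1 - d) * r) - tanh r \<le> (1 - d) * r - r" by (rule tanh_lipschitz)
  moreover have "tanh r \<le> r - r^3 / 7" using tanh_le_cubic r by blast
  moreover have "0 \<le> r^3" using r by simp
  ultimately show ?thesis by linarith
qed

lemma case2_lyapH:
  assumes n: "20 \<le> n" and d: "d \<le> 1/2" "- \<Delta> \<le> d" and D: "0 < \<Delta>" "\<Delta> \<le> 1/20"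
    and r: "2 / real n \<le> r" "r \<le> 1"
  defines "X \<equiv> sqrt (112 * \<Delta>)"
  defines "y \<equiv> 160 * \<Delta> * X"
  defines "\<theta> \<equiv> y * real n / 2"
  defines "K \<equiv> 640 * exp (\<theta> * X) / y^2"
  defines "a \<equiv> 224 / ((2 / real n) * X^3)"
  shows "K * exp (- \<theta> * r) * (\<theta> * (2 / real n) * (Uf n (1 - d) r - Df n (1 - d) r)
              - Df n (1 - d) r * (\<theta> * (2 / real n))^2 / 2)
            + a * (2 / real n) * (Uf n (1 - d) r - Df n (1 - d) r) \<le> -1"
proof -
  define \<rho> where "\<rho> = Uf n (1 - d) r - Df n (1 - d) r"
  define Dd where "Dd = Df n (1 - d) r"
  have n0: "0 < real n" using n by simp
  have X0: "0 < X" using D by (simp add: X_def)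
  have X2: "X^2 = 112 * \<Delta>" using D by (simp add: X_def)
  have y0: "0 < y" using D X0 by (simp add: y_def)
  have th0: "0 < \<theta>" using y0 n0 by (simp add: \<theta>_def)
  have K0: "0 \<le> K" by (simp add: K_def)
  have a0: "0 \<le> a" using X0 n0 by (simp add: a_def)
  have eq: "\<theta> * (2 / real n) = y" using n0 by (simp add: \<theta>_def)
  have r0: "0 \<le> r" using r n0 by (meson divide_nonneg_nonneg of_nat_0_le_iff order_trans zero_le_numeral)
  have r1n: "1 / real n \<le> r"
  proof -
    have "1 / real n \<le> 2 / real n" using n0 by (simp add: divide_right_mono)
    thus ?thesis using r by linarith
  qed
  have b0: "0 \<le> 1 - d" using d by simp
  have rho: "\<rho> \<le> (\<Delta> * r - r^3 / 56) / 2"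
  proof -
    have "\<rho> \<le> (tanh ((1 - d) * r) - r) / 2" unfolding \<rho>_def using UD_diff_pos[OF _ r1n b0] n0 by simp
    also have "tanh ((1 - d) * r) \<le> (1 - d) * r - r^3 / 56" using case2_tanh[OF d r0 r(2)] .
    hence "(tanh ((1 - d) * r) - r) / 2 \<le> ((1 - d) * r - r^3 / 56 - r) / 2" by simp
    also have "(1 - d) * r - r^3 / 56 - r \<le> \<Delta> * r - r^3 / 56"
    proof -
      have "- d * r \<le> \<Delta> * r" using d r0 by (intro mult_right_mono) auto
      thus ?thesis by (simp add: algebra_simps)
    qed
    finally show ?thesis by simp
  qed
  have Dd: "1/80 \<le> Dd"
  proof -
    have rn: "1 / real n \<le> 1/20" using n by (simp add: divide_le_eq)
    have "(1 + r) / 80 \<le> Dd" unfolding Dd_def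
    proof (rule UD_lower(2))
      show "\<bar>r\<bar> \<le> 1" using r r0 by simp
      have b1: "1 - d \<le> 21/20" using d D by simp
      have "0 \<le> (1 - d) * (r + 1 / real n)" using b0 r0 by simp
      moreover have "(1 - d) * (r + 1 / real n) \<le> (21/20) * (21/20)" using b0 b1 r rn r0 by (intro mult_mono) auto
      ultimately show "\<bar>(1 - d) * (r + 1 / real n)\<bar> \<le> 6/5" by (subst abs_of_nonneg) linarith+
      have "0 \<le> (1 - d) * (r - 1 / real n)" using b0 r1n by simp
      moreover have "(1 - d) * (r - 1 / real n) \<le> (21/20) * 1"
      proof -
        have "0 \<le> 1 / real n" by simp
        hence "r - 1 / real n \<le> 1" using r by linarith
        thus ?thesis using b0 b1 r1n by (intro mult_mono) auto
      qed
      ultimately show "\<bar>(1 - d) * (r - 1 / real n)\<bar> \<le> 6/5" by (subst abs_of_nonneg) linarith+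
    qed
    thus ?thesis using r0 by simp
  qed
  show ?thesis
  proof (cases "r \<le> X")
    case True
    have e: "exp (- \<theta> * X) \<le> exp (- \<theta> * r)"
    proof -
      have "\<theta> * r \<le> \<theta> * X" using True th0 by (intro mult_left_mono) auto
      thus ?thesis by simp
    qed
    have rhoX: "\<rho> \<le> \<Delta> * X / 2"
    proof -
      have "\<Delta> * r \<le> \<Delta> * X" using True D by (intro mult_left_mono) auto
      moreover have "0 \<le> r^3 / 56" using r0 by simp
      moreover have "(\<Delta> * r - r^3 / 56) / 2 = \<Delta> * r / 2 - r^3 / 112" by simp
      ultimately show ?thesis using rho by linarith
    qed
    have "y * \<rho> - Dd * y^2 / 2 \<le> - (y^2 / 320)"
    proof -
      have "y * \<rho> \<le> y * (\<Delta> * X / 2)" using rhoX y0 by (intro mult_left_mono) auto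
      also have "\<dots> = y^2 / 320" by (simp add: y_def power2_eq_square)
      finally have 1: "y * \<rho> \<le> y^2 / 320" .
      have "(1/80) * y^2 \<le> Dd * y^2" using Dd by (intro mult_right_mono) auto
      hence "y^2 / 160 \<le> Dd * y^2 / 2" by simp
      thus ?thesis using 1 by linarith
    qed
    hence "K * exp (- \<theta> * r) * (y * \<rho> - Dd * y^2 / 2) \<le> K * exp (- \<theta> * r) * (- (y^2 / 320))"
      using K0 by (intro mult_left_mono) auto
    also have "\<dots> \<le> K * exp (- \<theta> * X) * (- (y^2 / 320))"
      using e K0 by (intro mult_right_mono_neg mult_left_mono) auto
    also have "\<dots> = -2" using y0 by (simp add: K_def exp_minus field_simps)
    finally have 1: "K * exp (- \<theta> * r) * (y * \<rho> - Dd * y^2 / 2) \<le> -2" .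
    have "a * (2 / real n) * \<rho> \<le> a * (2 / real n) * (\<Delta> * X / 2)"
      using rhoX a0 n0 by (intro mult_left_mono) auto
    also have "\<dots> = 112 * \<Delta> / X^2" using X0 n0 by (simp add: a_def field_simps power2_eq_square power3_eq_cube)
    also have "\<dots> = 1" using X2 D by simp
    finally have 2: "a * (2 / real n) * \<rho> \<le> 1" .
    show ?thesis using 1 2 unfolding eq by (simp add: \<rho>_def Dd_def)
  next
    case False
    have rX: "X \<le> r" using False by simp
    have rho2: "\<rho> \<le> - (r^3 / 224)"
    proof -
      have "X^2 \<le> r^2" using rX X0 by (intro power_mono) auto
      hence "112 * \<Delta> \<le> r^2" using X2 by simp
      hence "112 * \<Delta> * r \<le> r^2 * r" using r0 by (intro mult_right_mono) auto
      hence "\<Delta> * r \<le> r^3 / 112" by (simp add: power3_eq_cube power2_eq_square)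
      thus ?thesis using rho by simp
    qed
    have rho0: "\<rho> \<le> 0" using rho2 r0 by (smt (verit) zero_le_power divide_nonneg_nonneg)
    have 1: "K * exp (- \<theta> * r) * (y * \<rho> - Dd * y^2 / 2) \<le> 0"
    proof -
      have "y * \<rho> \<le> 0" using y0 rho0 by (intro mult_nonneg_nonpos) auto
      moreover have "0 \<le> Dd * y^2 / 2" using Dd by simp
      ultimately have "y * \<rho> - Dd * y^2 / 2 \<le> 0" by linarith
      thus ?thesis using K0 by (simp add: mult_nonneg_nonpos)
    qed
    have "X^3 \<le> r^3" using rX X0 by (intro power_mono) auto
    hence "- (r^3 / 224) \<le> - (X^3 / 224)" by simp
    hence "\<rho> \<le> - (X^3 / 224)" using rho2 by linarith
    hence "a * (2 / real n) * \<rho> \<le> a * (2 / real n) * (- (X^3 / 224))"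
      using a0 n0 by (intro mult_left_mono) auto
    also have "\<dots> = -1" using X0 n0 by (simp add: a_def field_simps)
    finally have 2: "a * (2 / real n) * \<rho> \<le> -1" .
    show ?thesis using 1 2 unfolding eq by (simp add: \<rho>_def Dd_def)
  qed
qed



lemma case2_core:
  fixes d \<gamma> \<kappa> :: real
  assumes n: "20 \<le> n" and d: "d \<le> 1/2" and dk: "- d \<le> \<kappa> / sqrt (real n)"
    and ka: "1 \<le> \<kappa>" and ks: "\<kappa> / sqrt (real n) \<le> 1/20" and M: "224 * \<kappa> + 32 \<le> sqrt (real n)"
    and g: "1 \<le> \<gamma>" and k: "k \<le> n"
  shows "prob_tau0_gt n (1 - d) k ((200 + 6 * \<gamma> * (1 + 6 * sqrt (d ^ 2 * real n))) * real n powr (3/2))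
           \<le> (224 * \<kappa> + 33 + exp (8960 * \<kappa>^2)) / sqrt \<gamma>"
proof -
  define sn where "sn = sqrt (real n)"
  define \<Delta> where "\<Delta> = \<kappa> / sn"
  define M0 where "M0 = 224 * \<kappa> + 32"
  define \<beta> where "\<beta> = 1 - d"
  define x where "x = (\<lambda>t. ev n \<beta> t (\<lambda>j. (magn n j)^2) k)"
  define E where "E = exp (8960 * \<kappa>^2)"
  have n0: "0 < n" and n0': "0 < real n" using n by auto
  have sn0: "0 < sn" using n0' by (simp add: sn_def)
  have sn2: "sn * sn = real n" using n0' by (simp add: sn_def)
  have D0: "0 < \<Delta>" using ka sn0 by (simp add: \<Delta>_def)
  have D20: "\<Delta> \<le> 1/20" using ks by (simp add: \<Delta>_def sn_def)
  have dD: "- \<Delta> \<le> d" using dk by (simp add: \<Delta>_def sn_def)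
  have b0: "0 \<le> \<beta>" using d by (simp add: \<beta>_def)
  have dl: "\<bar>d\<bar> \<le> 1" using d dD D20 by simp
  have c01: "0 \<le> (1/56::real)" "(1/56::real) \<le> 1" by auto
  have M0s: "M0 \<le> sn" using M by (simp add: M0_def sn_def)
  have H: "\<And>r. 1 / real n \<le> r \<Longrightarrow> r \<le> 1 \<Longrightarrow> r * tanh (\<beta> * r) - r^2 \<le> - d * r^2 - 1/56 * r^4"
  proof -
    fix r assume r: "1 / real n \<le> r" "r \<le> 1"
    have "0 \<le> 1 / real n" by simp
    hence r0: "0 \<le> r" using r(1) by linarith
    have "tanh (\<beta> * r) \<le> (1 - d) * r - r^3 / 56" unfolding \<beta>_def using case2_tanh[OF d dD r0 r(2)] .
    hence "r * tanh (\<beta> * r) \<le> r * ((1 - d) * r - r^3 / 56)" using r0 by (intro mult_left_mono) auto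
    thus "r * tanh (\<beta> * r) - r^2 \<le> - d * r^2 - 1/56 * r^4"
      by (simp add: algebra_simps power2_eq_square power3_eq_cube power4_eq_xxxx)
  qed
  have n4: "4 \<le> n" using n by simp
  note WR = W_recur[OF n4 k b0 dl c01 H]
  have rec: "x (Suc t) \<le> x t - 2 / real n * (d * x t + 1/56 * (x t)^2) + 9 / (real n)^2" for t
    using WR(1) unfolding x_def by blast
  have xb: "0 \<le> x t \<and> x t \<le> 1" for t using WR(2,3) unfolding x_def by blast
  define L1 where "L1 = nat \<lceil>56 * real n * sn / M0\<rceil>"
  have M00: "32 \<le> M0" using ka by (simp add: M0_def)
  have A: "x L1 \<le> M0 / sn"
  proof -
    define G where "G = (\<lambda>w::real. w - 2 / real n * (d * w + 1/56 * w^2) + 9 / (real n)^2)"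
    define \<eta> where "\<eta> = 1 / (56 * real n)"
    have dec: "G w \<le> w - \<eta> * w^2" if w: "M0 / sn \<le> w" "w \<le> 1" for w
    proof -
      have "0 \<le> M0 / sn" using M00 sn0 by simp
      hence w0: "0 \<le> w" using w by linarith
      have wD: "224 * \<Delta> \<le> w"
      proof -
        have "224 * \<Delta> \<le> M0 / sn" using sn0 by (simp add: \<Delta>_def M0_def divide_right_mono)
        thus ?thesis using w by linarith
      qed
      have "(M0 / sn)^2 \<le> w^2" using w M00 sn0 by (intro power_mono) auto
      moreover have "(M0 / sn)^2 = M0^2 / real n" using sn2 by (simp add: power_divide power2_eq_square)
      moreover have "1024 \<le> M0^2" using M00 power_mono[of 32 M0 2] by simp
      moreover have "1024 / real n \<le> M0^2 / real n" using \<open>1024 \<le> M0^2\<close> n0' by (intro divide_right_mono) auto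
      ultimately have "1024 / real n \<le> w^2" by linarith
      hence t1: "9 / (real n)^2 \<le> w^2 / (112 * real n)" using n0' by (simp add: field_simps power2_eq_square)
      have "224 * \<Delta> * w \<le> w * w" using wD w0 by (intro mult_right_mono) auto
      hence t2: "2 / real n * (\<Delta> * w) \<le> w^2 / (112 * real n)" using n0' by (simp add: field_simps power2_eq_square)
      have t3: "- (2 / real n * (d * w)) \<le> 2 / real n * (\<Delta> * w)"
      proof -
        have "- d * w \<le> \<Delta> * w" using dD w0 by (intro mult_right_mono) auto
        hence "2 / real n * (- d * w) \<le> 2 / real n * (\<Delta> * w)" using n0' by (intro mult_left_mono) auto
        thus ?thesis by simp
      qed
      have "G w = w - 2 / real n * (d * w) - 2 * (w^2 / (56 * real n)) + 9 / (real n)^2"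
        by (simp add: G_def algebra_simps)
      moreover have "w^2 / (112 * real n) = (w^2 / (56 * real n)) / 2" by simp
      ultimately show ?thesis using t1 t2 t3 by (simp add: \<eta>_def)
    qed
    show ?thesis
    proof (rule phaseA'[where G=G and \<eta>=\<eta>])
      show "0 \<le> x t \<and> x t \<le> 1" for t by (rule xb)
      show "x (Suc t) \<le> G (x t)" for t using rec[of t] by (simp add: G_def)
      show "G a \<le> G b" if "0 \<le> a" "a \<le> b" "b \<le> 1" for a b
        unfolding G_def using G_mono[of n d "1/56" a b] n dl that by simp
      show "0 < M0 / sn" using M00 sn0 by simp
      show "M0 / sn \<le> 1" using M0s sn0 by simp
      have "0 \<le> \<eta> * (M0 / sn)^2" by (simp add: \<eta>_def)
      thus "G (M0 / sn) \<le> M0 / sn" using dec[of "M0 / sn"] M0s sn0 by simp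
      show "0 < \<eta>" using n0' by (simp add: \<eta>_def)
      show "G w \<le> w - \<eta> * w^2" if "M0 / sn \<le> w" "w \<le> 1" for w using dec that by blast
      have "1 / (\<eta> * (M0 / sn)) = 56 * real n * sn / M0" by (simp add: \<eta>_def)
      also have "\<dots> \<le> real L1" unfolding L1_def using M00 sn0 by (intro nat_ceiling_bounds) simp
      finally show "1 / (\<eta> * (M0 / sn)) \<le> real L1" .
    qed
  qed
  define X where "X = sqrt (112 * \<Delta>)"
  define y where "y = 160 * \<Delta> * X"
  define \<theta> where "\<theta> = y * real n / 2"
  define K where "K = 640 * exp (\<theta> * X) / y^2"
  define a where "a = 224 / ((2 / real n) * X^3)"
  have X0: "0 < X" using D0 by (simp add: X_def)
  have X2: "X^2 = 112 * \<Delta>" using D0 by (simp add: X_def)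
  have y0: "0 < y" using D0 X0 by (simp add: y_def)
  have th0: "0 \<le> \<theta>" using y0 n0' by (simp add: \<theta>_def)
  have K0: "0 \<le> K" by (simp add: K_def)
  have a0: "0 \<le> a" using X0 n0' by (simp add: a_def)
  have nD2: "real n * \<Delta>^2 = \<kappa>^2"
    using sn0 sn2 n0' by (simp add: \<Delta>_def power_divide power2_eq_square)
  have thX: "\<theta> * X = 8960 * \<kappa>^2"
  proof -
    have "\<theta> * X = 80 * real n * \<Delta> * X^2" by (simp add: \<theta>_def y_def power2_eq_square)
    also have "\<dots> = 8960 * (real n * \<Delta>^2)" using X2 by (simp add: power2_eq_square)
    finally show ?thesis using nD2 by simp
  qed
  have Kb: "K \<le> E * (real n * sn)"
  proof -
    have "y^2 = 2867200 * \<Delta>^3" using X2 by (simp add: y_def power_mult_distrib power2_eq_square power3_eq_cube)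
    hence "K = 640 * E / (2867200 * \<Delta>^3)" by (simp add: K_def thX E_def)
    also have "\<dots> \<le> E / \<Delta>^3" using D0 by (simp add: field_simps E_def)
    also have "E / \<Delta>^3 = E * (real n * sn) / \<kappa>^3"
      using sn0 sn2 ka by (simp add: \<Delta>_def power_divide power3_eq_cube field_simps)
    also have "\<dots> \<le> E * (real n * sn)"
    proof -
      have "1 \<le> \<kappa>^3" using ka by simp
      moreover have "0 \<le> E * (real n * sn)" using sn0 by (simp add: E_def)
      ultimately have "E * (real n * sn) / \<kappa>^3 \<le> E * (real n * sn) / 1"
        using ka by (intro divide_left_mono) auto
      thus ?thesis by simp
    qed
    finally show ?thesis .
  qed
  define R where "R = \<gamma> * X^2"
  have R0: "0 < R" using g X0 by (simp add: R_def)
  define VR where "VR = real n * sn * (E + sqrt \<gamma>)"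
  have VR0: "0 \<le> VR" unfolding VR_def E_def using sn0 g
    by (intro mult_nonneg_nonneg add_nonneg_nonneg) auto
  define tn where "tn = (200 + 6 * \<gamma> * (1 + 6 * sqrt (d ^ 2 * real n))) * real n powr (3/2)"
  have np: "real n powr (3/2) = real n * sn"
  proof -
    have "real n powr (3/2) = real n powr (1 + 1/2)" by simp
    also have "\<dots> = real n powr 1 * real n powr (1/2)" by (rule powr_add)
    also have "\<dots> = real n * sn" using n0' by (simp add: sn_def powr_half_sqrt)
    finally show ?thesis .
  qed
  have ns1: "1 \<le> real n * sn"
  proof -
    have "1 \<le> sn" using n by (simp add: sn_def)
    moreover have "1 \<le> real n" using n by simp
    ultimately show ?thesis using mult_mono[of 1 "real n" 1 sn] by simp
  qed
  have tnb: "(200 + 6 * \<gamma>) * (real n * sn) \<le> tn"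
  proof -
    have "6 * \<gamma> \<le> 6 * \<gamma> * (1 + 6 * sqrt (d ^ 2 * real n))" using g by simp
    thus ?thesis unfolding tn_def np using ns1 by (intro mult_right_mono) auto
  qed
  define m where "m = nat \<lfloor>tn\<rfloor>"
  define T2 where "T2 = m - L1"
  have time: "L1 \<le> m \<and> \<gamma> * (real n * sn) \<le> real (Suc T2)"
  proof -
    have "0 \<le> (200 + 6 * \<gamma>) * (real n * sn)" by (rule mult_nonneg_nonneg) (use g ns1 in linarith)+
    hence tn0: "0 \<le> tn" using tnb by linarith
    have "tn - 1 \<le> real m" unfolding m_def by (rule nat_floor_bounds[OF tn0])
    moreover have "real L1 \<le> 56 * real n * sn / M0 + 1" unfolding L1_def using M00 sn0 by (intro nat_ceiling_bounds) simp
    moreover have "56 * real n * sn / M0 \<le> 56 / 32 * (real n * sn)"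
      using M00 sn0 n0' by (simp add: field_simps mult_left_mono)
    moreover have "(200 + 6 * \<gamma>) * (real n * sn) = 200 * (real n * sn) + 6 * (\<gamma> * (real n * sn))"
      by (simp add: algebra_simps)
    moreover have "0 \<le> \<gamma> * (real n * sn)" using g ns1 by simp
    ultimately have le2: "real L1 + \<gamma> * (real n * sn) \<le> real m" and le: "real L1 \<le> real m"
      using tnb ns1 by linarith+
    hence "L1 \<le> m" by (simp only: of_nat_le_iff)
    moreover have "real (Suc T2) = real m - real L1 + 1" unfolding T2_def using \<open>L1 \<le> m\<close>
      by (simp only: of_nat_diff of_nat_Suc)
    ultimately show ?thesis using le2 by linarith
  qed
  have n20: "20 \<le> n" by (rule n)
  have Vb: "real (Suc T2) * survive n \<beta> T2 j \<le> VR" if j: "j \<le> n" "(magn n j)^2 \<le> R" for j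
  proof -
    have "real (Suc T2) * survive n \<beta> T2 j \<le> Phi K \<theta> a (magn n j)"
    proof (rule lyap_survive[OF n0 j(1) K0 th0 a0])
      fix r assume "2 / real n \<le> r" "r \<le> 1"
      thus "K * exp (- \<theta> * r) * (\<theta> * (2 / real n) * (Uf n \<beta> r - Df n \<beta> r) - Df n \<beta> r * (\<theta> * (2 / real n))\<^sup>2 / 2)
          + a * (2 / real n) * (Uf n \<beta> r - Df n \<beta> r) \<le> - 1"
        using case2_lyapH[OF n20 d dD D0 D20] unfolding \<beta>_def K_def y_def a_def \<theta>_def X_def by blast
    qed
    also have "\<dots> \<le> K + a * \<bar>magn n j\<bar>" by (rule Phi_le[OF K0 th0 a0])
    also have "a * \<bar>magn n j\<bar> \<le> real n * sn * sqrt \<gamma>"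
    proof -
      have "\<bar>magn n j\<bar> = sqrt ((magn n j)^2)" by simp
      also have "\<dots> \<le> sqrt R" by (rule real_sqrt_le_mono[OF j(2)])
      also have "sqrt R = sqrt \<gamma> * X" using X0 g by (simp add: R_def real_sqrt_mult)
      finally have "a * \<bar>magn n j\<bar> \<le> a * (sqrt \<gamma> * X)" using a0 by (intro mult_left_mono) auto
      also have "a * (sqrt \<gamma> * X) = 112 * real n * sqrt \<gamma> / X^2"
        using X0 n0' by (simp add: a_def field_simps power2_eq_square power3_eq_cube)
      also have "\<dots> = real n * sqrt \<gamma> / \<Delta>" using X2 D0 by simp
      also have "\<dots> = real n * sn * sqrt \<gamma> / \<kappa>" using sn0 ka by (simp add: \<Delta>_def field_simps)
      also have "\<dots> \<le> real n * sn * sqrt \<gamma>"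
      proof -
        have "0 \<le> real n * sn * sqrt \<gamma>" using sn0 g by simp
        hence "real n * sn * sqrt \<gamma> / \<kappa> \<le> real n * sn * sqrt \<gamma> / 1"
          using ka by (intro divide_left_mono) auto
        thus ?thesis by simp
      qed
      finally show ?thesis .
    qed
    finally show ?thesis using Kb by (simp add: VR_def algebra_simps)
  qed
  have main: "survive n \<beta> (L1 + T2) k \<le> x L1 / R + VR / real (Suc T2)"
    unfolding x_def by (rule combine[OF n0 k R0 VR0 Vb])
  have sg0: "0 < sqrt \<gamma>" using g by simp
  have sg: "sqrt \<gamma> \<le> \<gamma>"
  proof -
    have "1 \<le> sqrt \<gamma>" using g by simp
    hence "sqrt \<gamma> * 1 \<le> sqrt \<gamma> * sqrt \<gamma>" using sg0 by (intro mult_left_mono) auto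
    thus ?thesis using g by simp
  qed
  have "x L1 / R \<le> (M0 / sn) / R" using A R0 by (intro divide_right_mono) auto
  also have "\<dots> = M0 / (112 * \<kappa> * \<gamma>)" using sn0 X2 g by (simp add: R_def \<Delta>_def field_simps)
  also have "\<dots> \<le> M0 / \<gamma>"
  proof (rule divide_left_mono)
    have "\<gamma> * 1 \<le> \<gamma> * (112 * \<kappa>)" using ka g by (intro mult_left_mono) auto
    thus "\<gamma> \<le> 112 * \<kappa> * \<gamma>" by (simp add: mult.commute)
    show "0 \<le> M0" using M00 by simp
    show "0 < 112 * \<kappa> * \<gamma> * \<gamma>" using ka g by simp
  qed
  finally have t1: "x L1 / R \<le> M0 / \<gamma>" .
  have "VR / real (Suc T2) \<le> VR / (\<gamma> * (real n * sn))"
    using time VR0 g ns1 by (intro divide_left_mono) auto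
  also have "\<dots> = E / \<gamma> + sqrt \<gamma> / \<gamma>" using sn0 n0' g by (simp add: VR_def field_simps)
  also have "sqrt \<gamma> / \<gamma> = 1 / sqrt \<gamma>" using g sg0 by (simp add: field_simps)
  finally have t2: "VR / real (Suc T2) \<le> E / \<gamma> + 1 / sqrt \<gamma>" .
  have "M0 / \<gamma> + E / \<gamma> = (M0 + E) / \<gamma>" by (simp add: add_divide_distrib)
  also have "\<dots> \<le> (M0 + E) / sqrt \<gamma>" using sg sg0 M00 by (intro divide_left_mono) (auto simp: E_def)
  finally have fin: "M0 / \<gamma> + E / \<gamma> + 1 / sqrt \<gamma> \<le> (M0 + E + 1) / sqrt \<gamma>"
    by (simp add: add_divide_distrib)
  have "0 \<le> (200 + 6 * \<gamma>) * (real n * sn)" by (rule mult_nonneg_nonneg) (use g ns1 in linarith)+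
  hence tpos: "\<not> tn < 0" using tnb by linarith
  have "prob_tau0_gt n (1 - d) k tn = survive n \<beta> (L1 + T2) k"
    using tpos time unfolding prob_tau0_gt_def m_def[symmetric] T2_def \<beta>_def by simp
  also have "\<dots> \<le> (M0 + E + 1) / sqrt \<gamma>" using main t1 t2 fin by linarith
  finally have "prob_tau0_gt n (1 - d) k tn \<le> (M0 + E + 1) / sqrt \<gamma>" .
  moreover have "M0 + E + 1 = 224 * \<kappa> + 33 + exp (8960 * \<kappa>^2)" by (simp add: M0_def E_def)
  ultimately show ?thesis by (simp add: tn_def)
qed



lemma prob_le1:
  assumes "0 < n" "k \<le> n"
  shows "prob_tau0_gt n \<beta> k t \<le> 1"
  using survive_bounds[OF assms] by (simp add: prob_tau0_gt_def)

lemma ev_real_ge: "eventually (\<lambda>n. B \<le> real n) sequentially"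
proof -
  obtain N :: nat where "B < real N" using reals_Archimedean2 by blast
  thus ?thesis by (intro eventually_sequentiallyI[of N]) auto
qed

lemma ev_sqrt_ge:
  assumes "0 \<le> A"
  shows "eventually (\<lambda>n. A \<le> sqrt (real n)) sequentially"
  using ev_real_ge[of "A^2"] by eventually_elim (use assms in \<open>simp add: real_le_rsqrt\<close>)

theorem theorem4p3:
  fixes \<delta> :: "nat \<Rightarrow> real"
  assumes beta_pos: "\<forall>n. 0 < 1 - \<delta> n"
    and beta_upper: "\<exists>C. eventually (\<lambda>n. 1 - \<delta> n \<le> 1 + C / sqrt (real n)) sequentially"
  shows "(filterlim (\<lambda>n. \<delta> n ^ 2 * real n) at_top sequentially \<longrightarrow>
           (\<exists>c>0. \<forall>\<gamma>>0. eventually (\<lambda>n. \<forall>k\<le>n.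
              prob_tau0_gt n (1 - \<delta> n) k (tn_large \<delta> n \<gamma>) \<le> c / sqrt \<gamma>) sequentially))
       \<and> ((\<lambda>n. \<delta> n ^ 2 * real n) \<in> O(\<lambda>_. 1) \<longrightarrow>
           (\<exists>c>0. \<forall>\<gamma>>0. eventually (\<lambda>n. \<forall>k\<le>n.
              prob_tau0_gt n (1 - \<delta> n) k (tn_small \<delta> n \<gamma>) \<le> c / sqrt \<gamma>) sequentially))"
proof -
  obtain C where evC: "eventually (\<lambda>n. 1 - \<delta> n \<le> 1 + C / sqrt (real n)) sequentially"
    using beta_upper by blast
  have ev20: "eventually (\<lambda>n. 20 \<le> n) sequentially" by (rule eventually_ge_at_top)
  have P1: "\<exists>c>0. \<forall>\<gamma>>0. eventually (\<lambda>n. \<forall>k\<le>n.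
              prob_tau0_gt n (1 - \<delta> n) k (tn_large \<delta> n \<gamma>) \<le> c / sqrt \<gamma>) sequentially"
    if lim: "filterlim (\<lambda>n. \<delta> n ^ 2 * real n) at_top sequentially"
  proof (intro exI[of _ 300] conjI allI impI)
    show "(0::real) < 300" by simp
    fix \<gamma> :: real assume g0: "0 < \<gamma>"
    show "eventually (\<lambda>n. \<forall>k\<le>n. prob_tau0_gt n (1 - \<delta> n) k (tn_large \<delta> n \<gamma>) \<le> 300 / sqrt \<gamma>) sequentially"
    proof (cases "\<gamma> < 112")
      case True
      have "sqrt \<gamma> \<le> 300"
      proof -
        have "sqrt \<gamma> \<le> sqrt (300^2)" using True by (intro real_sqrt_le_mono) simp
        thus ?thesis by simp
      qed
      hence one: "1 \<le> 300 / sqrt \<gamma>" using g0 by (simp add: le_divide_eq)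
      show ?thesis using ev20
      proof eventually_elim
        case (elim n)
        show ?case
        proof (intro allI impI)
          fix k assume "k \<le> n"
          hence "prob_tau0_gt n (1 - \<delta> n) k (tn_large \<delta> n \<gamma>) \<le> 1" using elim by (intro prob_le1) auto
          thus "prob_tau0_gt n (1 - \<delta> n) k (tn_large \<delta> n \<gamma>) \<le> 300 / sqrt \<gamma>" using one by linarith
        qed
      qed
    next
      case False
      hence g: "112 \<le> \<gamma>" by simp
      have ev1: "eventually (\<lambda>n. max 504 (C^2 + 1) \<le> \<delta> n ^ 2 * real n) sequentially"
        using lim unfolding filterlim_at_top by blast
      show ?thesis using ev20 ev1 evC
      proof eventually_elim
        case (elim n)
        have dn: "504 \<le> \<delta> n ^ 2 * real n" using elim by simp
        have d1: "\<delta> n < 1" using beta_pos by (simp add: algebra_simps)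
        have dpos: "0 < \<delta> n"
        proof (rule ccontr)
          assume "\<not> 0 < \<delta> n"
          hence a: "0 \<le> - \<delta> n" by simp
          have b: "- \<delta> n \<le> C / sqrt (real n)" using elim by simp
          have "(- \<delta> n)^2 \<le> (C / sqrt (real n))^2" using a b by (intro power_mono) auto
          hence "\<delta> n ^ 2 \<le> C^2 / real n" by (simp add: power_divide)
          hence "\<delta> n ^ 2 * real n \<le> C^2" using elim by (simp add: le_divide_eq)
          thus False using elim by simp
        qed
        show ?case
        proof (intro allI impI)
          fix k assume k: "k \<le> n"
          show "prob_tau0_gt n (1 - \<delta> n) k (tn_large \<delta> n \<gamma>) \<le> 300 / sqrt \<gamma>"
            unfolding tn_large_def using case1_core[OF elim(1) dpos d1 dn g k] .
        qed
      qed
    qed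
  qed
  have P2: "\<exists>c>0. \<forall>\<gamma>>0. eventually (\<lambda>n. \<forall>k\<le>n.
              prob_tau0_gt n (1 - \<delta> n) k (tn_small \<delta> n \<gamma>) \<le> c / sqrt \<gamma>) sequentially"
    if big: "(\<lambda>n. \<delta> n ^ 2 * real n) \<in> O(\<lambda>_. 1)"
  proof -
    obtain c0 where c0: "0 < c0" and evc0: "eventually (\<lambda>n. norm (\<delta> n ^ 2 * real n) \<le> c0 * norm (1::real)) sequentially"
      using big by (elim landau_o.bigE) blast
    define \<kappa> where "\<kappa> = max 1 C"
    define c where "c = 224 * \<kappa> + 33 + exp (8960 * \<kappa>^2)"
    have ka: "1 \<le> \<kappa>" by (simp add: \<kappa>_def)
    have c1: "1 \<le> c" using ka by (simp add: c_def)
    show ?thesis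
    proof (intro exI[of _ c] conjI allI impI)
      show "0 < c" using c1 by simp
      fix \<gamma> :: real assume g0: "0 < \<gamma>"
      show "eventually (\<lambda>n. \<forall>k\<le>n. prob_tau0_gt n (1 - \<delta> n) k (tn_small \<delta> n \<gamma>) \<le> c / sqrt \<gamma>) sequentially"
      proof (cases "\<gamma> < 1")
        case True
        have "sqrt \<gamma> \<le> 1" using True by simp
        hence "sqrt \<gamma> \<le> c" using c1 by linarith
        hence one: "1 \<le> c / sqrt \<gamma>" using g0 by (simp add: le_divide_eq)
        show ?thesis using ev20
        proof eventually_elim
          case (elim n)
          show ?case
        proof (intro allI impI)
          fix k assume "k \<le> n"
          hence "prob_tau0_gt n (1 - \<delta> n) k (tn_small \<delta> n \<gamma>) \<le> 1" using elim by (intro prob_le1) auto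
          thus "prob_tau0_gt n (1 - \<delta> n) k (tn_small \<delta> n \<gamma>) \<le> c / sqrt \<gamma>" using one by linarith
        qed
        qed
      next
        case False
        hence g: "1 \<le> \<gamma>" by simp
        have e1: "eventually (\<lambda>n. 4 * c0 \<le> real n) sequentially" by (rule ev_real_ge)
        have e2: "eventually (\<lambda>n. 20 * \<kappa> \<le> sqrt (real n)) sequentially" using ka by (intro ev_sqrt_ge) simp
        have e3: "eventually (\<lambda>n. 224 * \<kappa> + 32 \<le> sqrt (real n)) sequentially" using ka by (intro ev_sqrt_ge) simp
        show ?thesis using ev20 evC evc0 e1 e2 e3
        proof eventually_elim
          case (elim n)
          have n0: "0 < real n" using elim by simp
          have sn0: "0 < sqrt (real n)" using n0 by simp
          have d: "\<delta> n \<le> 1/2"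
          proof -
            have "\<delta> n ^ 2 * real n \<le> c0" using elim by simp
            hence "\<delta> n ^ 2 * real n \<le> (1/4) * real n" using elim by linarith
            hence "\<delta> n ^ 2 \<le> 1/4" using n0 by (rule mult_right_le_imp_le)
            hence "\<delta> n ^ 2 \<le> (1/2)^2" by (simp add: power2_eq_square)
            hence "\<bar>\<delta> n\<bar> \<le> 1/2" using abs_le_square_iff by (metis abs_of_nonneg zero_le_divide_1_iff zero_le_numeral)
            thus ?thesis by simp
          qed
          have dk: "- \<delta> n \<le> \<kappa> / sqrt (real n)"
          proof -
            have "C / sqrt (real n) \<le> \<kappa> / sqrt (real n)" using sn0 by (intro divide_right_mono) (auto simp: \<kappa>_def)
            thus ?thesis using elim by simp
          qed
          have "\<kappa> * 20 \<le> sqrt (real n)" using elim(5) by linarith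
          hence ks: "\<kappa> / sqrt (real n) \<le> 1/20" using sn0 by (simp add: divide_le_eq)
          show ?case
          proof (intro allI impI)
            fix k assume k: "k \<le> n"
            show "prob_tau0_gt n (1 - \<delta> n) k (tn_small \<delta> n \<gamma>) \<le> c / sqrt \<gamma>"
              unfolding tn_small_def c_def using case2_core[OF elim(1) d dk ka ks elim(6) g k] .
          qed
        qed
      qed
    qed
  qed
  show ?thesis using P1 P2 by blast
qed


end
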